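(* Let $T$ be an unmixed balanced tree of height 3. Then either $T\cong P_6$, or there exists a sequence of vertices $v_1,\dots,v_k$ such that $T\cong\mathcal{O}(P_6,(v_1,\dots,v_k))$.
   Context: For a graph, a leaf is a vertex of degree 1; the height of a vertex is its minimum distance to a leaf (isolated vertex: height 0); $V_k$ denotes the vertices of height $k$; the height of the graph is the maximum height of its vertices. A tree is balanced if no two adjacent vertices have the same height. With $N(D)=\bigcup_{v\in D}\{u: uv\in E\}$, a TD-set is $D$ with $N(D)=V$, minimal if no proper subset is a TD-set, and the graph is unmixed if all minimal TD-sets have the same size. $P_n$ is the path with vertex set $\{0,1,\dots,n\}$ and edges $\{i-1,i\}$. The operation $\mathcal{O}$: for a tree $T$ and a vertex $v$ of height $1$, $2$ or $3$ in $T$, $\mathcal{O}(T,v)$ is obtained from $T$ by adding a disjoint copy of $P_0$ and joining its vertex $0$ to $v$ if $\mathrm{height}(v)=1$; adding a disjoint copy of $P_3$ and joining its vertex $3$ to $v$ if $\mathrm{height}(v)=2$; adding a disjoint copy of $P_2$ and joining its vertex $2$ to $v$ if $\mathrm{height}(v)=3$. Iteratively, $\mathcal{O}(T,(v_1,\dots,v_n))=\mathcal{O}(\mathcal{O}(T,(v_1,\dots,v_{n-1})),v_n)$, where each $v_j$ is a vertex of height 1, 2 or 3 in $\mathcal{O}(T,(v_1,\dots,v_{j-1}))$ (new vertices relabeled to be distinct). *)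

theory Defs
  imports Main
begin

type_synonym 'a graph = "'a set \<times> 'a set set"

definition verts :: "'a graph \<Rightarrow> 'a set" where "verts G = fst G"
definition edges :: "'a graph \<Rightarrow> 'a set set" where "edges G = snd G"

definition wf_graph :: "'a graph \<Rightarrow> bool" where
  "wf_graph G \<longleftrightarrow> finite (verts G) \<and>
     (\<forall>e\<in>edges G. \<exists>u v. e = {u, v} \<and> u \<noteq> v \<and> u \<in> verts G \<and> v \<in> verts G)"

definition nbhd :: "'a graph \<Rightarrow> 'a \<Rightarrow> 'a set" where
  "nbhd G v = {u \<in> verts G. {u, v} \<in> edges G}"

definition degree :: "'a graph \<Rightarrow> 'a \<Rightarrow> nat" where
  "degree G v = card (nbhd G v)"

definition leaf :: "'a graph \<Rightarrow> 'a \<Rightarrow> bool" where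
  "leaf G v \<longleftrightarrow> v \<in> verts G \<and> degree G v = 1"

definition walk :: "'a graph \<Rightarrow> 'a list \<Rightarrow> bool" where
  "walk G xs \<longleftrightarrow> xs \<noteq> [] \<and> set xs \<subseteq> verts G \<and>
     (\<forall>i. Suc i < length xs \<longrightarrow> {xs ! i, xs ! Suc i} \<in> edges G)"

definition connected_graph :: "'a graph \<Rightarrow> bool" where
  "connected_graph G \<longleftrightarrow>
     (\<forall>u\<in>verts G. \<forall>v\<in>verts G. \<exists>xs. walk G xs \<and> hd xs = u \<and> last xs = v)"

definition has_cycle :: "'a graph \<Rightarrow> bool" where
  "has_cycle G \<longleftrightarrow> (\<exists>xs. walk G xs \<and> distinct xs \<and> length xs \<ge> 3 \<and>
      {last xs, hd xs} \<in> edges G)"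

definition is_tree :: "'a graph \<Rightarrow> bool" where
  "is_tree G \<longleftrightarrow> wf_graph G \<and> verts G \<noteq> {} \<and> connected_graph G \<and> \<not> has_cycle G"

text \<open>Height of a vertex: minimum distance (number of edges) to a leaf; 0 if no leaf is
  reachable (in particular for an isolated vertex).\<close>
definition vheight :: "'a graph \<Rightarrow> 'a \<Rightarrow> nat" where
  "vheight G v =
    (if \<exists>l xs. leaf G l \<and> walk G xs \<and> hd xs = v \<and> last xs = l
     then LEAST n. \<exists>l xs. leaf G l \<and> walk G xs \<and> hd xs = v \<and> last xs = l \<and> length xs = Suc n
     else 0)"

definition gheight :: "'a graph \<Rightarrow> nat" where
  "gheight G = Max (vheight G ` verts G)"

definition balanced_tree :: "'a graph \<Rightarrow> bool" where
  "balanced_tree G \<longleftrightarrow> is_tree G \<and>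
     (\<forall>u\<in>verts G. \<forall>v\<in>verts G. {u, v} \<in> edges G \<longrightarrow> vheight G u \<noteq> vheight G v)"

definition NS :: "'a graph \<Rightarrow> 'a set \<Rightarrow> 'a set" where
  "NS G D = (\<Union>v\<in>D. nbhd G v)"

definition TD_set :: "'a graph \<Rightarrow> 'a set \<Rightarrow> bool" where
  "TD_set G D \<longleftrightarrow> D \<subseteq> verts G \<and> NS G D = verts G"

definition minimal_TD_set :: "'a graph \<Rightarrow> 'a set \<Rightarrow> bool" where
  "minimal_TD_set G D \<longleftrightarrow> TD_set G D \<and> (\<forall>D'. D' \<subset> D \<longrightarrow> \<not> TD_set G D')"

definition unmixed :: "'a graph \<Rightarrow> bool" where
  "unmixed G \<longleftrightarrow> (\<forall>D1 D2. minimal_TD_set G D1 \<and> minimal_TD_set G D2 \<longrightarrow> card D1 = card D2)"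

definition graph_iso :: "'a graph \<Rightarrow> 'b graph \<Rightarrow> bool" where
  "graph_iso G H \<longleftrightarrow> (\<exists>f. bij_betw f (verts G) (verts H) \<and>
     (\<forall>u\<in>verts G. \<forall>v\<in>verts G. {u, v} \<in> edges G \<longleftrightarrow> {f u, f v} \<in> edges H))"

definition path_graph :: "nat \<Rightarrow> nat graph" where
  "path_graph n = ({0..n}, {{i - 1, i} | i. i \<in> {1..n}})"

text \<open>The operation O(T,v) on nat-labelled graphs; new vertices are m, m+1, ... with
  m = Max V + 1 (fresh). A copy of P_k is m..m+k with vertex i of P_k being m+i.\<close>
definition add_pendant_path :: "nat graph \<Rightarrow> nat \<Rightarrow> nat \<Rightarrow> nat graph" where
  "add_pendant_path G k v =
    (let m = Suc (Max (verts G)) in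
     (verts G \<union> {m..m+k},
      edges G \<union> {{m + i - 1, m + i} | i. i \<in> {1..k}} \<union> {{m + k, v}}))"

definition opO :: "nat graph \<Rightarrow> nat \<Rightarrow> nat graph" where
  "opO G v =
    (if vheight G v = 1 then add_pendant_path G 0 v
     else if vheight G v = 2 then add_pendant_path G 3 v
     else if vheight G v = 3 then add_pendant_path G 2 v
     else G)"

fun opO_seq :: "nat graph \<Rightarrow> nat list \<Rightarrow> nat graph" where
  "opO_seq G [] = G"
| "opO_seq G (v # vs) = opO_seq (opO G v) vs"

fun valid_O_seq :: "nat graph \<Rightarrow> nat list \<Rightarrow> bool" where
  "valid_O_seq G [] = True"
| "valid_O_seq G (v # vs) =
     (v \<in> verts G \<and> vheight G v \<in> {1, 2, 3} \<and> valid_O_seq (opO G v) vs)"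

end

theory Submission
  imports Defs
begin

lemma nbhd_iff: "u \<in> nbhd G v \<longleftrightarrow> u \<in> verts G \<and> {u, v} \<in> edges G"
  by (simp add: nbhd_def)

lemma nbhd_sym: "u \<in> nbhd G v \<Longrightarrow> v \<in> verts G \<Longrightarrow> v \<in> nbhd G u"
  by (simp add: nbhd_def insert_commute)

lemma nbhd_subset: "nbhd G v \<subseteq> verts G"
  by (auto simp: nbhd_def)

lemma wf_edge: "wf_graph G \<Longrightarrow> {u, v} \<in> edges G \<Longrightarrow> u \<in> verts G \<and> v \<in> verts G \<and> u \<noteq> v"
  unfolding wf_graph_def by (metis doubleton_eq_iff)

lemma nbhd_neq: "wf_graph G \<Longrightarrow> u \<in> nbhd G v \<Longrightarrow> u \<noteq> v"
  unfolding nbhd_def using wf_edge[of G u v] by auto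

lemma nbhd_in_verts: "wf_graph G \<Longrightarrow> u \<in> nbhd G v \<Longrightarrow> v \<in> verts G"
  using wf_edge by (fastforce simp: nbhd_def)

lemma finite_nbhd: "wf_graph G \<Longrightarrow> finite (nbhd G v)"
  unfolding wf_graph_def by (meson finite_subset nbhd_subset)

lemma leaf_nbhd: "leaf G l \<Longrightarrow> \<exists>s. nbhd G l = {s}"
  unfolding leaf_def degree_def by (simp add: card_1_singleton_iff)

lemma walk_single[simp]: "walk G [x] \<longleftrightarrow> x \<in> verts G"
  by (simp add: walk_def)

lemma walk_Cons2[simp]: "walk G (x # y # xs) \<longleftrightarrow> x \<in> verts G \<and> {x, y} \<in> edges G \<and> walk G (y # xs)"
proof
  assume w: "walk G (x # y # xs)"
  hence "{x, y} \<in> edges G" unfolding walk_def by (metis Suc_less_eq length_Cons nth_Cons_0 nth_Cons_Suc zero_less_Suc)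
  moreover have "walk G (y # xs)" using w unfolding walk_def
    by (metis (no_types, lifting) Suc_less_eq length_Cons list.discI list.set_intros(2) nth_Cons_Suc set_subset_Cons subset_trans)
  ultimately show "x \<in> verts G \<and> {x, y} \<in> edges G \<and> walk G (y # xs)" using w by (simp add: walk_def)
next
  assume a: "x \<in> verts G \<and> {x, y} \<in> edges G \<and> walk G (y # xs)"
  show "walk G (x # y # xs)" unfolding walk_def
  proof (intro conjI allI impI)
    show "set (x # y # xs) \<subseteq> verts G" using a by (simp add: walk_def)
    fix i assume "Suc i < length (x # y # xs)"
    then show "{(x # y # xs) ! i, (x # y # xs) ! Suc i} \<in> edges G"
      using a unfolding walk_def by (cases i) auto
  qed simp
qed

lemma walk_Cons: "walk G (x # xs) \<longleftrightarrow> x \<in> verts G \<and> (xs = [] \<or> ({x, hd xs} \<in> edges G \<and> walk G xs))"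
  by (cases xs) auto

lemma walk_nonempty: "walk G xs \<Longrightarrow> xs \<noteq> []"
  by (simp add: walk_def)

lemma walk_append: "walk G xs \<Longrightarrow> walk G ys \<Longrightarrow> {last xs, hd ys} \<in> edges G \<Longrightarrow> walk G (xs @ ys)"
proof (induction xs)
  case Nil then show ?case by (simp add: walk_def)
next
  case (Cons a xs)
  show ?case
  proof (cases xs)
    case Nil
    then show ?thesis using Cons.prems walk_nonempty[of G ys] by (cases ys) auto
  next
    case (Cons b zs)
    then show ?thesis using Cons.prems Cons.IH by auto
  qed
qed

lemma walk_snoc: "walk G xs \<Longrightarrow> w \<in> verts G \<Longrightarrow> {last xs, w} \<in> edges G \<Longrightarrow> walk G (xs @ [w])"
  using walk_append[of G xs "[w]"] by simp

lemma walk_take: "walk G xs \<Longrightarrow> 0 < n \<Longrightarrow> walk G (take n xs)"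
proof (induction xs arbitrary: n)
  case Nil then show ?case by (simp add: walk_def)
next
  case (Cons a xs)
  then obtain m where n: "n = Suc m" by (cases n) auto
  show ?case
  proof (cases "m = 0 \<or> xs = []")
    case True then show ?thesis using Cons.prems n by (auto simp: walk_Cons)
  next
    case False
    then obtain b zs where xs: "xs = b # zs" by (cases xs) auto
    have "walk G (take m xs)" using Cons.IH[of m] Cons.prems False xs by auto
    then show ?thesis using Cons.prems n xs False by (cases m) auto
  qed
qed

lemma walk_drop: "walk G xs \<Longrightarrow> n < length xs \<Longrightarrow> walk G (drop n xs)"
proof (induction xs arbitrary: n)
  case Nil then show ?case by simp
next
  case (Cons a xs)
  show ?case
  proof (cases n)
    case 0 then show ?thesis using Cons.prems by simp
  next
    case (Suc m)
    then have "walk G xs" using Cons.prems by (cases xs) auto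
    then show ?thesis using Cons.IH[of m] Cons.prems Suc by simp
  qed
qed

lemma walk_rev: "walk G xs \<Longrightarrow> walk G (rev xs)"
proof (induction xs)
  case Nil then show ?case by (simp add: walk_def)
next
  case (Cons a xs)
  show ?case
  proof (cases xs)
    case Nil then show ?thesis using Cons.prems by simp
  next
    case (Cons b zs)
    have "walk G (rev xs)" using Cons.IH Cons.prems \<open>xs = b # zs\<close> by simp
    moreover have "{last (rev xs), a} \<in> edges G" using Cons.prems \<open>xs = b # zs\<close> by (simp add: insert_commute)
    moreover have "a \<in> verts G" using Cons.prems by (simp add: walk_Cons)
    ultimately show ?thesis using walk_snoc by fastforce
  qed
qed

lemma walk_edge_nth: "walk G xs \<Longrightarrow> Suc i < length xs \<Longrightarrow> {xs ! i, xs ! Suc i} \<in> edges G"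
  by (simp add: walk_def)

lemma walk_nth_verts: "walk G xs \<Longrightarrow> i < length xs \<Longrightarrow> xs ! i \<in> verts G"
  unfolding walk_def using nth_mem by blast

inductive ra :: "'a graph \<Rightarrow> 'a \<Rightarrow> 'a \<Rightarrow> 'a \<Rightarrow> bool" for G y where
  ra_refl: "x \<in> verts G \<Longrightarrow> x \<noteq> y \<Longrightarrow> ra G y x x"
| ra_step: "ra G y x z \<Longrightarrow> w \<in> nbhd G z \<Longrightarrow> w \<noteq> y \<Longrightarrow> ra G y x w"

lemma ra_verts: "ra G y a b \<Longrightarrow> a \<in> verts G \<and> b \<in> verts G \<and> a \<noteq> y \<and> b \<noteq> y"
  by (induction rule: ra.induct) (auto simp: nbhd_def)

lemma ra_trans: "ra G y b c \<Longrightarrow> ra G y a b \<Longrightarrow> ra G y a c"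
  by (induction rule: ra.induct) (auto intro: ra_step)

lemma ra_sym: "ra G y a b \<Longrightarrow> ra G y b a"
proof (induction rule: ra.induct)
  case (ra_refl x) then show ?case by (rule ra.ra_refl)
next
  case (ra_step x z w)
  have zv: "z \<in> verts G" "z \<noteq> y" using ra_verts[OF ra_step.hyps(1)] by auto
  have wv: "w \<in> verts G" using ra_step.hyps(2) by (simp add: nbhd_def)
  have "z \<in> nbhd G w" using nbhd_sym[OF ra_step.hyps(2) zv(1)] .
  have "ra G y w z"
    by (rule ra.ra_step[OF ra.ra_refl[OF wv ra_step.hyps(3)] \<open>z \<in> nbhd G w\<close> zv(2)])
  then show ?case using ra_trans ra_step by metis
qed

lemma ra_edge: "ra G y a b \<Longrightarrow> c \<in> nbhd G b \<Longrightarrow> c \<noteq> y \<Longrightarrow> ra G y a c"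
  by (rule ra_step)

lemma ra_path: "ra G y a b \<Longrightarrow> \<exists>p. walk G p \<and> distinct p \<and> hd p = a \<and> last p = b \<and> y \<notin> set p"
proof (induction rule: ra.induct)
  case (ra_refl x) then show ?case by (intro exI[of _ "[x]"]) auto
next
  case (ra_step x z w)
  then obtain p where p: "walk G p" "distinct p" "hd p = x" "last p = z" "y \<notin> set p" by blast
  show ?case
  proof (cases "w \<in> set p")
    case True
    then obtain p1 p2 where sp: "p = p1 @ w # p2" by (meson split_list)
    have "walk G (take (Suc (length p1)) p)" using walk_take p(1) by blast
    moreover have "take (Suc (length p1)) p = p1 @ [w]" using sp by simp
    ultimately have "walk G (p1 @ [w])" by simp
    moreover have "distinct (p1 @ [w])" using p(2) sp by simp
    moreover have "hd (p1 @ [w]) = x" using p(3) sp by (cases p1) auto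
    moreover have "y \<notin> set (p1 @ [w])" using p(5) sp by simp
    ultimately show ?thesis by (intro exI[of _ "p1 @ [w]"]) simp
  next
    case False
    have "walk G (p @ [w])"
      using walk_snoc[OF p(1)] ra_step.hyps(2) p(4) by (auto simp: nbhd_def insert_commute)
    moreover have "hd (p @ [w]) = x" using p(3) walk_nonempty[OF p(1)] by simp
    ultimately show ?thesis using p False ra_step.hyps(3) by (intro exI[of _ "p @ [w]"]) simp
  qed
qed

lemma ra_cycle:
  assumes "y \<in> verts G" "a \<in> nbhd G y" "b \<in> nbhd G y" "a \<noteq> b" "ra G y a b"
  shows "has_cycle G"
proof -
  obtain p where p: "walk G p" "distinct p" "hd p = a" "last p = b" "y \<notin> set p"
    using ra_path[OF assms(5)] by blast
  obtain c q where pq: "p = c # q" using walk_nonempty[OF p(1)] by (cases p) auto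
  have qne: "q \<noteq> []" 
  proof
    assume "q = []" then have "hd p = last p" using pq by simp
    then show False using p(3,4) assms(4) by simp
  qed
  have "walk G (y # p)" using p pq assms(1,2) by (auto simp: nbhd_def insert_commute)
  moreover have "distinct (y # p)" using p by simp
  moreover have "length (y # p) \<ge> 3" using pq qne by (cases q) auto
  moreover have "{last (y # p), hd (y # p)} \<in> edges G" using p(1,4) assms(3) walk_nonempty[of G p]
    by (auto simp: nbhd_def)
  ultimately show ?thesis unfolding has_cycle_def by blast
qed

lemma finite_distinct_lists: "finite S \<Longrightarrow> finite {p. set p \<subseteq> S \<and> distinct p}"
proof -
  assume "finite S"
  have "{p. set p \<subseteq> S \<and> distinct p} \<subseteq> {p. set p \<subseteq> S \<and> length p \<le> card S}"
  proof (rule subsetI)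
    fix p assume "p \<in> {p. set p \<subseteq> S \<and> distinct p}"
    then have a: "set p \<subseteq> S" "distinct p" by auto
    then have "length p \<le> card S"
      using distinct_card[of p] card_mono[OF \<open>finite S\<close>, of "set p"] by simp
    then show "p \<in> {p. set p \<subseteq> S \<and> length p \<le> card S}" using a by simp
  qed
  moreover have "finite {p. set p \<subseteq> S \<and> length p \<le> card S}"
    using finite_lists_length_le[OF \<open>finite S\<close>] by simp
  ultimately show ?thesis using finite_subset by blast
qed

lemma deg2_cycle:
  assumes fin: "finite S" and sub: "S \<subseteq> verts G" and ne: "S \<noteq> {}"
    and deg: "\<forall>x\<in>S. \<exists>a b. a \<noteq> b \<and> a \<in> nbhd G x \<inter> S \<and> b \<in> nbhd G x \<inter> S"
    and wf: "wf_graph G"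
  shows "has_cycle G"
proof -
  define Ps where "Ps = {p. walk G p \<and> distinct p \<and> set p \<subseteq> S}"
  have finP: "finite Ps" unfolding Ps_def
    by (rule finite_subset[OF _ finite_distinct_lists[OF fin]]) blast
  obtain x where x: "x \<in> S" using ne by blast
  have "[x] \<in> Ps" using x sub unfolding Ps_def by simp blast
  then have "Ps \<noteq> {}" by blast
  have "finite (length ` Ps)" "length ` Ps \<noteq> {}" using finP \<open>Ps \<noteq> {}\<close> by auto
  then obtain p where pP: "p \<in> Ps" and pl: "length p = Max (length ` Ps)"
    using Max_in by (metis imageE)
  have pmax: "length q \<le> length p" if "q \<in> Ps" for q
    using pl that \<open>finite (length ` Ps)\<close> by simp
  have pw: "walk G p" and pd: "distinct p" and pS: "set p \<subseteq> S" using pP unfolding Ps_def by auto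
  have pne: "p \<noteq> []" using walk_nonempty[OF pw] .
  define n where "n = length p"
  define z where "z = last p"
  have zS: "z \<in> S" using pS pne z_def by auto
  have nz: "p ! (n - 1) = z" using pne unfolding n_def z_def by (simp add: last_conv_nth)
  have inp: "c \<in> set p" if "c \<in> nbhd G z \<inter> S" for c
  proof (rule ccontr)
    assume "c \<notin> set p"
    have cv: "c \<in> verts G" "{z, c} \<in> edges G" using that by (auto simp: nbhd_def insert_commute)
    have "walk G (p @ [c])" using walk_snoc[OF pw cv(1)] cv(2) z_def by simp
    then have "p @ [c] \<in> Ps" using \<open>c \<notin> set p\<close> pd pS that unfolding Ps_def by simp
    then show False using pmax[of "p @ [c]"] by simp
  qed
  obtain a b where ab: "a \<noteq> b" "a \<in> nbhd G z \<inter> S" "b \<in> nbhd G z \<inter> S" using deg zS by blast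
  obtain c where c: "c \<in> nbhd G z \<inter> S" "n \<ge> 2 \<longrightarrow> c \<noteq> p ! (n - 2)"
  proof (cases "n \<ge> 2 \<and> a = p ! (n - 2)")
    case True then show ?thesis using that[of b] ab by simp
  next
    case False then show ?thesis using that[of a] ab by simp
  qed
  have "c \<in> set p" using inp c by blast
  then obtain j where j: "j < n" "p ! j = c" unfolding n_def by (meson in_set_conv_nth)
  have "c \<noteq> z" using c(1) nbhd_neq[OF wf] by blast
  then have "j \<noteq> n - 1" using j nz by auto
  have "j \<noteq> n - 2 \<or> n < 2" using c(2) j by auto
  then have j3: "j + 3 \<le> n" using j \<open>j \<noteq> n - 1\<close> by linarith
  define q where "q = drop j p"
  have "walk G q" unfolding q_def using walk_drop[OF pw] j n_def by blast
  moreover have "distinct q" unfolding q_def using pd by simp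
  moreover have "length q \<ge> 3" unfolding q_def n_def using j3 n_def by simp
  moreover have "hd q = c" unfolding q_def using j n_def by (simp add: hd_drop_conv_nth)
  moreover have "last q = z" unfolding q_def z_def using j n_def by simp
  moreover have "{last q, hd q} \<in> edges G" using c(1) \<open>hd q = c\<close> \<open>last q = z\<close> by (simp add: nbhd_def insert_commute)
  ultimately show ?thesis unfolding has_cycle_def by blast
qed

definition reach_leaf :: "'a graph \<Rightarrow> 'a \<Rightarrow> nat \<Rightarrow> bool" where
  "reach_leaf G v n \<longleftrightarrow> (\<exists>l xs. leaf G l \<and> walk G xs \<and> hd xs = v \<and> last xs = l \<and> length xs = Suc n)"

lemma vheight_alt: "vheight G v = (if \<exists>n. reach_leaf G v n then (LEAST n. reach_leaf G v n) else 0)"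
proof -
  have e: "(\<exists>l xs. leaf G l \<and> walk G xs \<and> hd xs = v \<and> last xs = l) \<longleftrightarrow> (\<exists>n. reach_leaf G v n)"
    unfolding reach_leaf_def
  proof
    assume "\<exists>l xs. leaf G l \<and> walk G xs \<and> hd xs = v \<and> last xs = l"
    then obtain l xs where "leaf G l \<and> walk G xs \<and> hd xs = v \<and> last xs = l" by blast
    moreover then have "length xs = Suc (length xs - 1)" using walk_nonempty by fastforce
    ultimately show "\<exists>n l xs. leaf G l \<and> walk G xs \<and> hd xs = v \<and> last xs = l \<and> length xs = Suc n" by blast
  qed blast
  show ?thesis unfolding vheight_def e unfolding reach_leaf_def by simp
qed

lemma vheight_le: "reach_leaf G v n \<Longrightarrow> vheight G v \<le> n"
  unfolding vheight_alt by (auto intro: Least_le)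

lemma vheight_wit: "reach_leaf G v n \<Longrightarrow> reach_leaf G v (vheight G v)"
  unfolding vheight_alt by (auto intro: LeastI)

lemma height_char:
  assumes A: "\<forall>x\<in>verts G. h x = 0 \<longleftrightarrow> leaf G x"
    and B: "\<forall>x\<in>verts G. 0 < h x \<longrightarrow> (\<exists>y\<in>nbhd G x. Suc (h y) = h x)"
    and C: "\<forall>x\<in>verts G. \<forall>y\<in>nbhd G x. h x \<le> Suc (h y)"
    and x: "x \<in> verts G"
  shows "vheight G x = h x"
proof -
  have r: "\<forall>x\<in>verts G. h x = n \<longrightarrow> reach_leaf G x n" for n
  proof (induction n)
    case 0
    show ?case
    proof (intro ballI impI)
      fix x assume "x \<in> verts G" "h x = 0"
      then have "leaf G x" using A by blast
      then show "reach_leaf G x 0" unfolding reach_leaf_def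
        using \<open>x \<in> verts G\<close> by (intro exI[of _ x] exI[of _ "[x]"]) simp
    qed
  next
    case (Suc n)
    show ?case
    proof (intro ballI impI)
      fix x assume x: "x \<in> verts G" "h x = Suc n"
      then obtain y where y: "y \<in> nbhd G x" "h y = n" using B by force
      have yv: "y \<in> verts G" "{x, y} \<in> edges G" using y by (auto simp: nbhd_def insert_commute)
      obtain l xs where l: "leaf G l" "walk G xs" "hd xs = y" "last xs = l" "length xs = Suc n"
        using Suc.IH yv(1) y(2) unfolding reach_leaf_def by blast
      have "walk G (x # xs)" using l x yv walk_nonempty[OF l(2)] by (simp add: walk_Cons)
      moreover have "last (x # xs) = l" using l walk_nonempty[OF l(2)] by simp
      ultimately show "reach_leaf G x (Suc n)" unfolding reach_leaf_def using l by (intro exI[of _ l] exI[of _ "x # xs"]) simp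
    qed
  qed
  have lb: "walk G xs \<Longrightarrow> leaf G (last xs) \<Longrightarrow> h (hd xs) \<le> length xs - 1" for xs
  proof (induction xs)
    case Nil then show ?case using walk_nonempty by blast
  next
    case (Cons a xs)
    show ?case
    proof (cases xs)
      case Nil then show ?thesis using Cons.prems A by (simp add: leaf_def)
    next
      case (Cons b zs)
      have ab: "a \<in> verts G" "{a, b} \<in> edges G" "walk G (b # zs)" using Cons.prems(1) Cons by auto
      have "b \<in> nbhd G a" using ab walk_nth_verts[OF ab(3), of 0] by (simp add: nbhd_def insert_commute)
      then have "h a \<le> Suc (h b)" using C ab(1) by blast
      moreover have "h b \<le> length xs - 1" using Cons.IH ab(3) Cons.prems(2) Cons by simp
      ultimately show ?thesis using Cons by simp
    qed
  qed
  have "reach_leaf G x (h x)" using r x by blast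
  moreover have "h x \<le> m" if "reach_leaf G x m" for m
    using that lb unfolding reach_leaf_def by fastforce
  ultimately show ?thesis
    using vheight_le vheight_wit by (meson le_antisym)
qed

definition isof :: "'a graph \<Rightarrow> 'b graph \<Rightarrow> ('a \<Rightarrow> 'b) \<Rightarrow> bool" where
  "isof G H f \<longleftrightarrow> bij_betw f (verts G) (verts H) \<and>
     (\<forall>u\<in>verts G. \<forall>v\<in>verts G. {u, v} \<in> edges G \<longleftrightarrow> {f u, f v} \<in> edges H)"

lemma graph_iso_isof: "graph_iso G H \<longleftrightarrow> (\<exists>f. isof G H f)"
  by (simp add: graph_iso_def isof_def)

lemma isof_inv: assumes "isof G H f" shows "isof H G (inv_into (verts G) f)"
proof -
  let ?g = "inv_into (verts G) f"
  have b: "bij_betw f (verts G) (verts H)" using assms by (simp add: isof_def)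
  have bg: "bij_betw ?g (verts H) (verts G)" using bij_betw_inv_into[OF b] .
  have "{?g u, ?g v} \<in> edges G \<longleftrightarrow> {u, v} \<in> edges H" if "u \<in> verts H" "v \<in> verts H" for u v
  proof -
    have "?g u \<in> verts G" "?g v \<in> verts G" using bg that bij_betwE by blast+
    moreover have "f (?g u) = u" "f (?g v) = v" using b that by (meson bij_betw_inv_into_right)+
    ultimately show ?thesis using assms unfolding isof_def by metis
  qed
  then show ?thesis using bg unfolding isof_def by blast
qed

lemma isof_nbhd: assumes "isof G H f" "x \<in> verts G" shows "nbhd H (f x) = f ` nbhd G x"
proof -
  have b: "bij_betw f (verts G) (verts H)" and e: "\<forall>u\<in>verts G. \<forall>v\<in>verts G. {u, v} \<in> edges G \<longleftrightarrow> {f u, f v} \<in> edges H"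
    using assms by (auto simp: isof_def)
  show ?thesis
  proof
    show "nbhd H (f x) \<subseteq> f ` nbhd G x"
    proof
      fix y assume "y \<in> nbhd H (f x)"
      then have y: "y \<in> verts H" "{y, f x} \<in> edges H" by (auto simp: nbhd_def)
      then obtain u where u: "u \<in> verts G" "y = f u" using b by (metis bij_betw_imp_surj_on imageE)
      then have "{u, x} \<in> edges G" using e y assms(2) by blast
      then show "y \<in> f ` nbhd G x" using u by (auto simp: nbhd_def)
    qed
  next
    show "f ` nbhd G x \<subseteq> nbhd H (f x)"
    proof
      fix y assume "y \<in> f ` nbhd G x"
      then obtain u where u: "u \<in> nbhd G x" "y = f u" by blast
      then have "u \<in> verts G" "{u, x} \<in> edges G" by (auto simp: nbhd_def)
      then show "y \<in> nbhd H (f x)" using e assms(2) u b bij_betwE by (fastforce simp: nbhd_def)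
    qed
  qed
qed

lemma isof_leaf: assumes "isof G H f" "x \<in> verts G" shows "leaf H (f x) \<longleftrightarrow> leaf G x"
proof -
  have b: "bij_betw f (verts G) (verts H)" using assms by (simp add: isof_def)
  have i: "inj_on f (nbhd G x)" using b nbhd_subset bij_betw_imp_inj_on inj_on_subset by metis
  have "degree H (f x) = degree G x" unfolding degree_def using isof_nbhd[OF assms] card_image[OF i] by simp
  moreover have "f x \<in> verts H" using b assms(2) bij_betwE by blast
  ultimately show ?thesis using assms(2) by (simp add: leaf_def)
qed

lemma isof_walk: assumes "isof G H f" "walk G xs" shows "walk H (map f xs)"
  using assms(2)
proof (induction xs)
  case Nil then show ?case by (simp add: walk_def)
next
  case (Cons a xs)
  have b: "bij_betw f (verts G) (verts H)" and e: "\<forall>u\<in>verts G. \<forall>v\<in>verts G. {u, v} \<in> edges G \<longleftrightarrow> {f u, f v} \<in> edges H"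
    using assms by (auto simp: isof_def)
  show ?case
  proof (cases xs)
    case Nil then show ?thesis using Cons.prems b bij_betwE by fastforce
  next
    case (Cons c zs)
    have "a \<in> verts G" "{a, c} \<in> edges G" "walk G (c # zs)" using Cons.prems Cons by auto
    moreover have "c \<in> verts G" using walk_nth_verts[OF \<open>walk G (c # zs)\<close>, of 0] by simp
    ultimately show ?thesis using Cons.IH Cons e b bij_betwE by fastforce
  qed
qed

lemma isof_reach: assumes "isof G H f" "reach_leaf G x n" shows "reach_leaf H (f x) n"
proof -
  obtain l xs where l: "leaf G l" "walk G xs" "hd xs = x" "last xs = l" "length xs = Suc n"
    using assms(2) unfolding reach_leaf_def by blast
  have ne: "xs \<noteq> []" using walk_nonempty[OF l(2)] .
  have "l \<in> verts G" using l(1) by (simp add: leaf_def)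
  then have "leaf H (f l)" using isof_leaf[OF assms(1)] l(1) by blast
  moreover have "walk H (map f xs)" using isof_walk[OF assms(1) l(2)] .
  moreover have "hd (map f xs) = f x" "last (map f xs) = f l" using ne l by (simp_all add: hd_map last_map)
  ultimately show ?thesis unfolding reach_leaf_def using l(5) by (intro exI[of _ "f l"] exI[of _ "map f xs"]) simp
qed

lemma isof_vheight: assumes "isof G H f" "x \<in> verts G" shows "vheight H (f x) = vheight G x"
proof -
  let ?g = "inv_into (verts G) f"
  have b: "bij_betw f (verts G) (verts H)" using assms by (simp add: isof_def)
  have gx: "?g (f x) = x" using b assms(2) by (simp add: bij_betw_def inv_into_f_f)
  have "reach_leaf H (f x) n \<longleftrightarrow> reach_leaf G x n" for n
    using isof_reach[OF assms(1)] isof_reach[OF isof_inv[OF assms(1)], of "f x" n] gx by metis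
  then have "reach_leaf H (f x) = reach_leaf G x" by blast
  then show ?thesis unfolding vheight_alt by (simp only:)
qed

locale htree =
  fixes T :: "'a graph"
  assumes wf: "wf_graph T"
    and acyc: "\<not> has_cycle T"
    and cconn: "\<forall>X. X \<subseteq> verts T \<longrightarrow> X \<noteq> {} \<longrightarrow> (\<forall>x\<in>X. nbhd T x \<subseteq> X) \<longrightarrow> X = verts T"
    and hA: "\<forall>x\<in>verts T. vheight T x = 0 \<longleftrightarrow> leaf T x"
    and hB: "\<forall>x\<in>verts T. 0 < vheight T x \<longrightarrow> (\<exists>y\<in>nbhd T x. Suc (vheight T y) = vheight T x)"
    and hC: "\<forall>x\<in>verts T. \<forall>y\<in>nbhd T x. vheight T x = Suc (vheight T y) \<or> vheight T y = Suc (vheight T x)"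
    and h3: "\<forall>x\<in>verts T. vheight T x \<le> 3"
    and ex3: "\<exists>x\<in>verts T. vheight T x = 3"
begin

abbreviation V where "V \<equiv> verts T"
abbreviation h where "h \<equiv> vheight T"
abbreviation N where "N \<equiv> nbhd T"

lemma fin: "finite V" using wf by (simp add: wf_graph_def)

lemma nbV: assumes a: "y \<in> N x" shows "y \<in> V \<and> x \<in> V"
proof
  show "y \<in> V" using a by (simp add: nbhd_def)
  show "x \<in> V" using nbhd_in_verts[OF wf a] .
qed

lemma nbsym: assumes "y \<in> N x" shows "x \<in> N y"
  using nbhd_sym[OF assms] nbV[OF assms] by simp

lemma nbneq: assumes "y \<in> N x" shows "y \<noteq> x"
  using nbhd_neq[OF wf assms] .

lemma nbh: assumes "y \<in> N x" shows "h x = Suc (h y) \<or> h y = Suc (h x)"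
  using hC nbV[OF assms] assms by blast

lemma hle3: "x \<in> V \<Longrightarrow> h x \<le> 3" using h3 by blast

lemma leaf_iff: "x \<in> V \<Longrightarrow> h x = 0 \<longleftrightarrow> leaf T x" using hA by blast

lemma leafV: "leaf T l \<Longrightarrow> l \<in> V" by (simp add: leaf_def)

lemma leafN: assumes "leaf T l" "s \<in> N l" shows "N l = {s}"
  using leaf_nbhd[OF assms(1)] assms(2) by auto

lemma leafN2: assumes "leaf T l" "l \<in> N s" shows "N l = {s}"
  using leafN[OF assms(1) nbsym[OF assms(2)]] .

lemma leaf_h1: assumes "leaf T l" "l \<in> N s" shows "h s = 1"
proof -
  have "h l = 0" using leaf_iff leafV assms(1) by blast
  then show ?thesis using nbh[OF assms(2)] by simp
qed

lemma descend: "x \<in> V \<Longrightarrow> 0 < h x \<Longrightarrow> \<exists>y\<in>N x. Suc (h y) = h x"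
  using hB by blast

lemma nonleaf2: assumes "x \<in> V" "0 < h x" shows "\<exists>a b. a \<noteq> b \<and> a \<in> N x \<and> b \<in> N x"
proof -
  have ne: "N x \<noteq> {}" using descend[OF assms] by blast
  have "\<not> leaf T x" using leaf_iff[OF assms(1)] assms(2) by simp
  then have "card (N x) \<noteq> 1" using assms(1) by (simp add: leaf_def degree_def)
  moreover have "finite (N x)" using finite_nbhd[OF wf] .
  ultimately have "card (N x) \<ge> 2" using ne by (metis One_nat_def card_0_eq less_2_cases not_less)
  then obtain a where a: "a \<in> N x" using ne by blast
  have "card (N x - {a}) \<ge> 1" using \<open>card (N x) \<ge> 2\<close> a \<open>finite (N x)\<close> by simp
  then obtain b where "b \<in> N x - {a}" by (metis One_nat_def card.empty ex_in_conv not_less_eq_eq zero_le)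
  then show ?thesis using a by blast
qed

lemma V1_leaf: assumes "x \<in> V" "h x = 1" shows "\<exists>l\<in>N x. leaf T l"
proof -
  obtain y where "y \<in> N x" "Suc (h y) = h x" using descend assms by force
  then have "h y = 0" using assms(2) by simp
  then show ?thesis using leaf_iff[of y] nbV[OF \<open>y \<in> N x\<close>] \<open>y \<in> N x\<close> by blast
qed

lemma V3_nb: assumes "h x = 3" "y \<in> N x" shows "h y = 2"
  using nbh[OF assms(2)] hle3[of y] nbV[OF assms(2)] assms(1) by linarith

lemma V1_nb: assumes "h x = 1" "y \<in> N x" shows "h y = 0 \<or> h y = 2"
  using nbh[OF assms(2)] assms(1) by auto

lemma V2_nb: assumes "h x = 2" "y \<in> N x" shows "h y = 1 \<or> h y = 3"
  using nbh[OF assms(2)] assms(1) by auto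

lemma cconn': "X \<subseteq> V \<Longrightarrow> X \<noteq> {} \<Longrightarrow> (\<forall>x\<in>X. N x \<subseteq> X) \<Longrightarrow> X = V"
  using cconn by blast

lemma V1_V2: assumes "x \<in> V" "h x = 1" shows "\<exists>y\<in>N x. h y = 2"
proof (rule ccontr)
  assume "\<not> ?thesis"
  then have allL: "\<forall>y\<in>N x. leaf T y" using V1_nb[OF assms(2)] leaf_iff nbV by blast
  let ?X = "insert x (N x)"
  have "?X = V"
  proof (rule cconn')
    show "?X \<subseteq> V" using assms(1) nbV by blast
    show "?X \<noteq> {}" by blast
    show "\<forall>y\<in>?X. N y \<subseteq> ?X"
    proof
      fix y assume "y \<in> ?X"
      then show "N y \<subseteq> ?X"
      proof
        assume "y = x" then show ?thesis by blast
      next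
        assume "y \<in> N x" then show ?thesis using leafN2[OF allL[rule_format, OF \<open>y \<in> N x\<close>]] by simp
      qed
    qed
  qed
  obtain z where "z \<in> V" "h z = 3" using ex3 by blast
  then have "z \<in> ?X" using \<open>?X = V\<close> by blast
  then show False
  proof
    assume "z = x" then show False using \<open>h z = 3\<close> assms(2) by simp
  next
    assume "z \<in> N x" then have "leaf T z" using allL by blast
    then have "h z = 0" using leaf_iff[OF \<open>z \<in> V\<close>] by simp
    then show False using \<open>h z = 3\<close> by simp
  qed
qed

lemma cyc: assumes "a \<in> N y" "b \<in> N y" "a \<noteq> b" "ra T y a b" shows False
  using ra_cycle[OF _ assms] nbV[OF assms(1)] acyc by blast

lemma ra0: "a \<in> V \<Longrightarrow> a \<noteq> y \<Longrightarrow> ra T y a a" by (rule ra_refl)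

lemma ra1: assumes "ra T y a b" "b \<in> N c" "c \<noteq> y" shows "ra T y a c"
  using ra_step[OF assms(1) nbsym[OF assms(2)] assms(3)] .

lemma TD_intro: assumes "D \<subseteq> V" "\<forall>y\<in>V. \<exists>d\<in>D. d \<in> N y" shows "TD_set T D"
  unfolding TD_set_def NS_def
proof (intro conjI equalityI)
  show "D \<subseteq> V" by fact
  show "(\<Union>v\<in>D. N v) \<subseteq> V"
  proof
    fix y assume "y \<in> (\<Union>v\<in>D. N v)"
    then obtain v where "y \<in> N v" by blast
    then show "y \<in> V" using nbV by blast
  qed
  show "V \<subseteq> (\<Union>v\<in>D. N v)"
  proof
    fix y assume "y \<in> V"
    then obtain d where "d \<in> D" "d \<in> N y" using assms(2) by blast
    then show "y \<in> (\<Union>v\<in>D. N v)" using nbsym[of d y] by blast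
  qed
qed

lemma TD_elim: assumes "TD_set T D" "y \<in> V" shows "\<exists>d\<in>D. d \<in> N y"
proof -
  have "y \<in> (\<Union>v\<in>D. N v)" using assms unfolding TD_set_def NS_def by simp
  then obtain d where "d \<in> D" "y \<in> N d" by blast
  then show ?thesis using nbsym[of y d] by blast
qed

lemma TD_sub: "TD_set T D \<Longrightarrow> D \<subseteq> V" by (simp add: TD_set_def)

lemma min_exists: assumes "TD_set T C" shows "\<exists>D\<subseteq>C. minimal_TD_set T D"
proof -
  let ?S = "{D. D \<subseteq> C \<and> TD_set T D}"
  have "C \<in> ?S" using assms by blast
  have finC: "finite C" using TD_sub[OF assms] fin finite_subset by blast
  obtain D where D: "D \<in> ?S" "\<forall>D'\<in>?S. card D \<le> card D'"
  proof -
    define D where "D = arg_min_on card ?S"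
    have "D \<in> ?S \<and> (\<forall>D'\<in>?S. card D \<le> card D')"
      unfolding D_def using arg_min_nat_lemma[of "\<lambda>D. D \<in> ?S" C card] \<open>C \<in> ?S\<close>
      by (simp add: arg_min_on_def arg_min_def)
    then show ?thesis using that by blast
  qed
  have "minimal_TD_set T D"
    unfolding minimal_TD_set_def
  proof (intro conjI allI impI)
    show "TD_set T D" using D by blast
    fix D' assume "D' \<subset> D"
    have finD: "finite D" using finC D(1) finite_subset by blast
    have lt: "card D' < card D" using psubset_card_mono[OF finD \<open>D' \<subset> D\<close>] .
    show "\<not> TD_set T D'"
    proof
      assume "TD_set T D'"
      then have "D' \<in> ?S" using \<open>D' \<subset> D\<close> D(1) by blast
      then have "card D \<le> card D'" using D(2) by blast
      then show False using lt by simp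
    qed
  qed
  then show ?thesis using D by blast
qed

lemma unmixed_le: assumes "unmixed T" "minimal_TD_set T D" "TD_set T D'" shows "card D \<le> card D'"
proof -
  obtain D'' where "D'' \<subseteq> D'" "minimal_TD_set T D''" using min_exists[OF assms(3)] by blast
  then have "card D = card D''" using assms(1,2) unfolding unmixed_def by blast
  moreover have "card D'' \<le> card D'" using card_mono[OF finite_subset[OF TD_sub[OF assms(3)] fin] \<open>D'' \<subseteq> D'\<close>] .
  ultimately show ?thesis by simp
qed

lemma forced: assumes "minimal_TD_set T D" "D \<subseteq> C" "y \<in> V" "N y \<inter> C \<subseteq> {x}" shows "x \<in> D"
proof -
  have "TD_set T D" using assms(1) unfolding minimal_TD_set_def by simp
  then obtain d where d: "d \<in> D" "d \<in> N y" using TD_elim[OF _ assms(3)] by blast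
  then have "d \<in> N y \<inter> C" using assms(2) by blast
  then have "d = x" using assms(4) by blast
  then show ?thesis using d by simp
qed

lemma TD_compl: assumes "\<forall>y\<in>V. \<exists>d\<in>N y. d \<notin> X" shows "TD_set T (V - X)"
proof (rule TD_intro)
  show "V - X \<subseteq> V" by blast
  show "\<forall>y\<in>V. \<exists>d\<in>V - X. d \<in> N y"
  proof
    fix y assume "y \<in> V"
    then obtain d where "d \<in> N y" "d \<notin> X" using assms by blast
    then show "\<exists>d\<in>V - X. d \<in> N y" using nbV[of d y] by blast
  qed
qed

end

context htree begin

lemma hV1: "y \<in> N x \<Longrightarrow> h x = 1 \<Longrightarrow> h y = 0 \<or> h y = 2" using V1_nb by blast

lemma leaf_h0: "leaf T l \<Longrightarrow> h l = 0" using leaf_iff[OF leafV] by blast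

lemma nb_exists: assumes "y \<in> V" shows "\<exists>d. d \<in> N y"
proof (cases "h y = 0")
  case True
  then have "leaf T y" using leaf_iff[OF assms] by simp
  then show ?thesis using leaf_nbhd[of T y] by blast
next
  case False then show ?thesis using descend[OF assms] by blast
qed

lemma case_b:
  assumes um: "unmixed T" and w: "w \<in> V" "h w = 2"
    and s: "s1 \<in> N w" "s2 \<in> N w" "h s1 = 1" "h s2 = 1"
  shows "s1 = s2"
proof (rule ccontr)
  assume ne: "s1 \<noteq> s2"
  have s1V: "s1 \<in> V" and s2V: "s2 \<in> V" using nbV[OF s(1)] nbV[OF s(2)] by auto
  obtain l1 where l1: "l1 \<in> N s1" "leaf T l1" using V1_leaf[OF s1V s(3)] by blast
  obtain l2 where l2: "l2 \<in> N s2" "leaf T l2" using V1_leaf[OF s2V s(4)] by blast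
  have Nl1: "N l1 = {s1}" using leafN2[OF l1(2) l1(1)] .
  have Nl2: "N l2 = {s2}" using leafN2[OF l2(2) l2(1)] .
  have hl1: "h l1 = 0" using leaf_h0[OF l1(2)] .
  have hl2: "h l2 = 0" using leaf_h0[OF l2(2)] .
  have l12: "l1 \<noteq> l2" using Nl1 Nl2 ne by auto
  define X where "X = (N s1 \<union> N s2) - {l1, l2}"
  have Xh: "h x = 0 \<or> h x = 2" if "x \<in> X" for x
  proof -
    have "x \<in> N s1 \<or> x \<in> N s2" using that X_def by blast
    then show ?thesis
    proof
      assume "x \<in> N s1" then show ?thesis using hV1[OF _ s(3)] by blast
    next
      assume "x \<in> N s2" then show ?thesis using hV1[OF _ s(4)] by blast
    qed
  qed
  have toW: "ra T y x w" if "x \<in> X" "h y = 3" for x y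
  proof -
    have xV: "x \<in> V" using that(1) X_def nbV by blast
    have xy: "x \<noteq> y" using Xh[OF that(1)] that(2) by auto
    have "x \<in> N s1 \<or> x \<in> N s2" using that X_def by blast
    then show ?thesis
    proof
      assume "x \<in> N s1"
      have "ra T y x s1" using ra1[OF ra0[OF xV xy] \<open>x \<in> N s1\<close>] s(3) that(2) by force
      then show ?thesis using ra1[OF _ s(1)] w(2) that(2) by force
    next
      assume "x \<in> N s2"
      have "ra T y x s2" using ra1[OF ra0[OF xV xy] \<open>x \<in> N s2\<close>] s(4) that(2) by force
      then show ?thesis using ra1[OF _ s(2)] w(2) that(2) by force
    qed
  qed
  have TD0: "TD_set T (V - X)"
  proof (rule TD_compl, rule ballI)
    fix y assume y: "y \<in> V"
    show "\<exists>d\<in>N y. d \<notin> X"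
    proof (cases "y = s1")
      case True then show ?thesis using l1(1) X_def by blast
    next
      case ys1: False
      show ?thesis
      proof (cases "y = s2")
        case True then show ?thesis using l2(1) X_def by blast
      next
        case ys2: False
        have "h y \<le> 3" using hle3[OF y] .
        then consider "h y = 0 \<or> h y = 2" | "h y = 1" | "h y = 3" by linarith
        then show ?thesis
        proof cases
          case 1
          obtain d where d: "d \<in> N y" using nb_exists[OF y] by blast
          have "h d = 1 \<or> h d = 3" using nbh[OF d] 1 by auto
          then have "d \<notin> X" using Xh by force
          then show ?thesis using d by blast
        next
          case 2
          obtain l where l: "l \<in> N y" "leaf T l" using V1_leaf[OF y 2] by blast
          have "l \<notin> X"
          proof
            assume "l \<in> X"
            then have "l \<in> N s1 \<or> l \<in> N s2" using X_def by blast
            then show False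
            proof
              assume "l \<in> N s1" then have "N l = {s1}" using leafN2[OF l(2)] by blast
              then show False using nbsym[OF l(1)] ys1 by blast
            next
              assume "l \<in> N s2" then have "N l = {s2}" using leafN2[OF l(2)] by blast
              then show False using nbsym[OF l(1)] ys2 by blast
            qed
          qed
          then show ?thesis using l by blast
        next
          case 3
          obtain a b where ab: "a \<noteq> b" "a \<in> N y" "b \<in> N y" using nonleaf2[OF y] 3 by auto
          show ?thesis
          proof (rule ccontr)
            assume "\<not> ?thesis"
            then have "a \<in> X" "b \<in> X" using ab by auto
            then have "ra T y a w" "ra T y b w" using toW 3 by auto
            then have "ra T y a b" using ra_trans ra_sym by metis
            then show False using cyc[OF ab(2,3,1)] by blast
          qed
        qed
      qed
    qed
  qed
  obtain D where D: "D \<subseteq> V - X" "minimal_TD_set T D" using min_exists[OF TD0] by blast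
  have TDD: "TD_set T D" using D(2) unfolding minimal_TD_set_def by simp
  have l1D: "l1 \<in> D"
  proof (rule forced[OF D(2) D(1) s1V])
    show "N s1 \<inter> (V - X) \<subseteq> {l1}"
    proof
      fix x assume "x \<in> N s1 \<inter> (V - X)"
      then have "x \<in> N s1" "x = l1 \<or> x = l2" using X_def by auto
      moreover have "x \<noteq> l2" using nbsym[of x s1] Nl2 ne \<open>x \<in> N s1\<close> by auto
      ultimately show "x \<in> {l1}" by auto
    qed
  qed
  have l2D: "l2 \<in> D"
  proof (rule forced[OF D(2) D(1) s2V])
    show "N s2 \<inter> (V - X) \<subseteq> {l2}"
    proof
      fix x assume "x \<in> N s2 \<inter> (V - X)"
      then have "x \<in> N s2" "x = l1 \<or> x = l2" using X_def by auto
      moreover have "x \<noteq> l1" using nbsym[of x s2] Nl1 ne \<open>x \<in> N s2\<close> by auto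
      ultimately show "x \<in> {l2}" by auto
    qed
  qed
  have "w \<in> X" using nbsym[OF s(1)] w(2) hl1 hl2 X_def by auto
  then have wD: "w \<notin> D" using D(1) by blast
  define D' where "D' = insert w (D - {l1, l2})"
  have "TD_set T D'"
  proof (rule TD_intro)
    show "D' \<subseteq> V" using D(1) w(1) D'_def by blast
    show "\<forall>y\<in>V. \<exists>d\<in>D'. d \<in> N y"
    proof
      fix y assume y: "y \<in> V"
      obtain d where d: "d \<in> D" "d \<in> N y" using TD_elim[OF TDD y] by blast
      show "\<exists>d\<in>D'. d \<in> N y"
      proof (cases "d = l1 \<or> d = l2")
        case True
        then show ?thesis
        proof
          assume "d = l1" then have "y = s1" using nbsym[OF d(2)] Nl1 by blast
          then show ?thesis using nbsym[OF s(1)] D'_def by blast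
        next
          assume "d = l2" then have "y = s2" using nbsym[OF d(2)] Nl2 by blast
          then show ?thesis using nbsym[OF s(2)] D'_def by blast
        qed
      next
        case False then show ?thesis using d D'_def by blast
      qed
    qed
  qed
  then have "card D \<le> card D'" using unmixed_le[OF um D(2)] by blast
  moreover have finD: "finite D" using D(1) fin finite_subset by blast
  moreover have "card D' = Suc (card (D - {l1, l2}))" unfolding D'_def using finD wD by simp
  moreover have "card (D - {l1, l2}) = card D - 2"
    using card_Diff_subset[of "{l1,l2}" D] finD l1D l2D l12 by simp
  moreover have "card D \<ge> 2"
    using card_mono[OF finD, of "{l1, l2}"] l1D l2D l12 by simp
  ultimately show False by linarith
qed

end

context htree begin

lemma case_a:
  assumes um: "unmixed T" and s: "s \<in> V" "h s = 1"
    and w: "w1 \<in> N s" "w2 \<in> N s" "w1 \<noteq> w2" "h w1 = 2" "h w2 = 2"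
  shows False
proof -
  have w1V: "w1 \<in> V" and w2V: "w2 \<in> V" using nbV[OF w(1)] nbV[OF w(2)] by auto
  have sw1: "s \<in> N w1" and sw2: "s \<in> N w2" using nbsym[OF w(1)] nbsym[OF w(2)] by auto
  have uq1: "a = s" if "a \<in> N w1" "h a = 1" for a
    using case_b[OF um w1V w(4) that(1) sw1 that(2) s(2)] .
  have uq2: "a = s" if "a \<in> N w2" "h a = 1" for a
    using case_b[OF um w2V w(5) that(1) sw2 that(2) s(2)] .
  have ex3: "\<exists>u\<in>N w. h u = 3" if p1: "w \<in> V" and p2: "h w = 2" and p3: "\<And>a. a \<in> N w \<Longrightarrow> h a = 1 \<Longrightarrow> a = s" for w
  proof -
    obtain a b where ab: "a \<noteq> b" "a \<in> N w" "b \<in> N w" using nonleaf2[OF p1] p2 by auto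
    have "h a = 1 \<or> h a = 3" "h b = 1 \<or> h b = 3" using V2_nb[OF p2] ab by auto
    then show ?thesis using p3 ab by metis
  qed
  define N3 where "N3 = {u \<in> N w2. h u = 3}"
  obtain u0 where u0: "u0 \<in> N3" using ex3[OF w2V w(5) uq2] N3_def by blast
  obtain u1 where u1: "u1 \<in> N w1" "h u1 = 3" using ex3[OF w1V w(4) uq1] by blast
  have N3D: "u \<in> N w2" "h u = 3" "u \<in> V" if "u \<in> N3" for u using that N3_def nbV by auto
  have zex: "\<exists>z. z \<in> N u \<and> z \<noteq> w2" if p: "u \<in> N3" for u
  proof -
    obtain a b where ab: "a \<noteq> b" "a \<in> N u" "b \<in> N u" using nonleaf2[of u] N3D[OF p] by auto
    then show ?thesis by metis
  qed
  define zf where "zf u = (SOME z. z \<in> N u \<and> z \<noteq> w2)" for u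
  have zf: "zf u \<in> N u" "zf u \<noteq> w2" "h (zf u) = 2" "zf u \<in> V" if "u \<in> N3" for u
  proof -
    show a: "zf u \<in> N u" "zf u \<noteq> w2" unfolding zf_def using someI_ex[OF zex[OF that]] by auto
    show "h (zf u) = 2" using V3_nb[OF N3D(2)[OF that] a(1)] .
    show "zf u \<in> V" using nbV[OF a(1)] by simp
  qed
  define sg where "sg z = (SOME s'. s' \<in> N z \<and> h s' = 1)" for z
  define lf where "lf s' = (SOME l. l \<in> N s' \<and> leaf T l)" for s'
  define S where "S u = sg (zf u)" for u
  define L where "L u = lf (S u)" for u
  have S: "S u \<in> N (zf u)" "h (S u) = 1" "S u \<in> V" "zf u \<in> N (S u)" if "u \<in> N3" for u
  proof -
    have "\<exists>s'. s' \<in> N (zf u) \<and> h s' = 1" using descend[OF zf(4)[OF that]] zf(3)[OF that] by force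
    then show a: "S u \<in> N (zf u)" "h (S u) = 1" unfolding S_def sg_def using someI_ex by (metis (mono_tags, lifting))+
    show "S u \<in> V" using nbV[OF a(1)] by simp
    show "zf u \<in> N (S u)" using nbsym[OF a(1)] .
  qed
  have L: "L u \<in> N (S u)" "leaf T (L u)" "N (L u) = {S u}" "h (L u) = 0" if "u \<in> N3" for u
  proof -
    have "\<exists>l. l \<in> N (S u) \<and> leaf T l" using V1_leaf[OF S(3)[OF that] S(2)[OF that]] by blast
    then show a: "L u \<in> N (S u)" "leaf T (L u)" unfolding L_def lf_def using someI_ex by (metis (mono_tags, lifting))+
    show "N (L u) = {S u}" using leafN2[OF a(2) a(1)] .
    show "h (L u) = 0" using leaf_h0[OF a(2)] .
  qed
  have Sne: "S u \<noteq> s" if "u \<in> N3" for u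
  proof
    assume "S u = s"
    then have zs: "zf u \<in> N s" using S(4)[OF that] by simp
    have "ra T s (zf u) u" using ra1[OF ra0[OF zf(4)[OF that]] zf(1)[OF that]] zf(3)[OF that] S(2)[OF that] N3D(2)[OF that] \<open>S u = s\<close> s(2) by force
    then have "ra T s (zf u) w2" using ra1[OF _ N3D(1)[OF that]] w(5) s(2) by force
    then show False using cyc[OF zs w(2) zf(2)[OF that]] by blast
  qed
  define X where "X = (\<Union>u\<in>N3. N u - {w2}) \<union> (N u1 - {w1}) \<union> (\<Union>u\<in>N3. N (S u) - {L u})"
  have Xh: "h x = 0 \<or> h x = 2" if xX: "x \<in> X" for x
  proof -
    consider (k1) u where "u \<in> N3" "x \<in> N u" | (k2) "x \<in> N u1" | (k3) u where "u \<in> N3" "x \<in> N (S u)"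
      using xX X_def by blast
    then show ?thesis
    proof cases
      case k1 then show ?thesis using V3_nb[OF N3D(2)] by blast
    next
      case k2 then show ?thesis using V3_nb[OF u1(2)] by blast
    next
      case k3 then show ?thesis using hV1[OF _ S(2)] by blast
    qed
  qed
  have w2X: "w2 \<notin> X"
  proof
    assume "w2 \<in> X"
    then consider (k1) u where "u \<in> N3" "w2 \<in> N u - {w2}" | (k2) "w2 \<in> N u1" | (k3) u where "u \<in> N3" "w2 \<in> N (S u)"
      using X_def by blast
    then show False
    proof cases
      case k1 then show ?thesis by blast
    next
      case k2
      have "ra T s w1 u1" using ra1[OF ra0[OF w1V] nbsym[OF u1(1)]] w(4) s(2) u1(2) by force
      then have "ra T s w1 w2" using ra1[OF _ nbsym[OF k2]] w(5) s(2) by force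
      then show False using cyc[OF w(1) w(2) w(3)] by blast
    next
      case k3
      have "S u = s" using uq2[OF nbsym[OF k3(2)] S(2)[OF k3(1)]] .
      then show False using Sne[OF k3(1)] by blast
    qed
  qed
  have w1X: "w1 \<notin> X"
  proof
    assume "w1 \<in> X"
    then consider (k1) u where "u \<in> N3" "w1 \<in> N u" | (k2) "w1 \<in> N u1 - {w1}" | (k3) u where "u \<in> N3" "w1 \<in> N (S u)"
      using X_def by blast
    then show False
    proof cases
      case k1
      have "ra T s w1 u" using ra1[OF ra0[OF w1V] k1(2)] w(4) s(2) N3D(2)[OF k1(1)] by force
      then have "ra T s w1 w2" using ra1[OF _ N3D(1)[OF k1(1)]] w(5) s(2) by force
      then show False using cyc[OF w(1) w(2) w(3)] by blast
    next
      case k2 then show ?thesis by blast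
    next
      case k3
      have "S u = s" using uq1[OF nbsym[OF k3(2)] S(2)[OF k3(1)]] .
      then show False using Sne[OF k3(1)] by blast
    qed
  qed
  have u1N3: "u1 \<notin> N3 \<or> True" by simp
  have toW2: "ra T y x w2" if t1: "x \<in> X" and t2: "x \<in> N y" and t3: "h y = 3" and t4: "y \<notin> N3" and t5: "y \<noteq> u1" for x y
  proof -
    have xV: "x \<in> V" using nbV[OF t2] by simp
    have xy: "x \<noteq> y" using nbneq[OF t2] .
    have yw2: "w2 \<noteq> y" using t3 w(5) by auto
    consider (k1) u where "u \<in> N3" "x \<in> N u" | (k2) "x \<in> N u1" | (k3) u where "u \<in> N3" "x \<in> N (S u)"
      using t1 X_def by blast
    then show ?thesis
    proof cases
      case k1
      have "u \<noteq> y" using t4 k1(1) by blast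
      then have "ra T y x u" using ra1[OF ra0[OF xV xy] k1(2)] by blast
      then show ?thesis using ra1[OF _ N3D(1)[OF k1(1)] yw2] by blast
    next
      case k2
      have "ra T y x u1" using ra1[OF ra0[OF xV xy] k2] t5 by blast
      then have "ra T y x w1" using ra1[OF _ u1(1)] w(4) t3 by force
      then have "ra T y x s" using ra1[OF _ w(1)] s(2) t3 by force
      then show ?thesis using ra1[OF _ sw2 yw2] by blast
    next
      case k3
      have "ra T y x (S u)" using ra1[OF ra0[OF xV xy] k3(2)] S(2)[OF k3(1)] t3 by force
      then have "ra T y x (zf u)" using ra1[OF _ S(1)[OF k3(1)]] zf(3)[OF k3(1)] t3 by force
      then have "ra T y x u" using ra1[OF _ zf(1)[OF k3(1)]] t4 k3(1) by blast
      then show ?thesis using ra1[OF _ N3D(1)[OF k3(1)] yw2] by blast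
    qed
  qed
  have TD0: "TD_set T (V - X)"
  proof (rule TD_compl, rule ballI)
    fix y assume y: "y \<in> V"
    have "h y \<le> 3" using hle3[OF y] .
    then consider "h y = 0 \<or> h y = 2" | "h y = 1" | "h y = 3" by linarith
    then show "\<exists>d\<in>N y. d \<notin> X"
    proof cases
      case 1
      obtain d where d: "d \<in> N y" using nb_exists[OF y] by blast
      have "h d = 1 \<or> h d = 3" using nbh[OF d] 1 by auto
      then have "d \<notin> X" using Xh by force
      then show ?thesis using d by blast
    next
      case 2
      show ?thesis
      proof (cases "\<exists>u\<in>N3. y = S u")
        case True
        then obtain u where u: "u \<in> N3" "y = S u" by blast
        have "L u \<notin> X"
        proof
          assume "L u \<in> X"
          then consider (k1) u' where "u' \<in> N3" "L u \<in> N u'" | (k2) "L u \<in> N u1" | (k3) u' where "u' \<in> N3" "L u \<in> N (S u') - {L u'}"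
            using X_def by blast
          then show False
          proof cases
            case k1 then show ?thesis using V3_nb[OF N3D(2)[OF k1(1)] k1(2)] L(4)[OF u(1)] by simp
          next
            case k2 then show ?thesis using V3_nb[OF u1(2) k2] L(4)[OF u(1)] by simp
          next
            case k3
            have "S u' \<in> N (L u)" using nbsym k3(2) by blast
            then have "S u' = S u" using L(3)[OF u(1)] by blast
            then have "L u' = L u" unfolding L_def by simp
            then show False using k3(2) by simp
          qed
        qed
        then show ?thesis using L(1)[OF u(1)] u(2) by blast
      next
        case False
        obtain l where l: "l \<in> N y" "leaf T l" using V1_leaf[OF y 2] by blast
        have "l \<notin> X"
        proof
          assume "l \<in> X"
          then consider (k1) u' where "u' \<in> N3" "l \<in> N u'" | (k2) "l \<in> N u1" | (k3) u' where "u' \<in> N3" "l \<in> N (S u')"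
            using X_def by blast
          then show False
          proof cases
            case k1 then show ?thesis using V3_nb[OF N3D(2)[OF k1(1)] k1(2)] leaf_h0[OF l(2)] by simp
          next
            case k2 then show ?thesis using V3_nb[OF u1(2) k2] leaf_h0[OF l(2)] by simp
          next
            case k3
            have "N l = {S u'}" using leafN2[OF l(2) k3(2)] .
            then have "y = S u'" using nbsym[OF l(1)] by blast
            then show False using False k3(1) by blast
          qed
        qed
        then show ?thesis using l by blast
      qed
    next
      case 3
      show ?thesis
      proof (cases "y \<in> N3")
        case True then show ?thesis using nbsym[OF N3D(1)[OF True]] w2X by blast
      next
        case nN3: False
        show ?thesis
        proof (cases "y = u1")
          case True then show ?thesis using nbsym[OF u1(1)] w1X by blast
        next
          case False
          obtain a b where ab: "a \<noteq> b" "a \<in> N y" "b \<in> N y" using nonleaf2[OF y] 3 by auto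
          show ?thesis
          proof (rule ccontr)
            assume "\<not> ?thesis"
            then have "a \<in> X" "b \<in> X" using ab by auto
            then have "ra T y a w2" "ra T y b w2" using toW2 ab 3 nN3 False by auto
            then have "ra T y a b" using ra_trans ra_sym by metis
            then show False using cyc[OF ab(2,3,1)] by blast
          qed
        qed
      qed
    qed
  qed
  obtain D where D: "D \<subseteq> V - X" "minimal_TD_set T D" using min_exists[OF TD0] by blast
  have TDD: "TD_set T D" using D(2) unfolding minimal_TD_set_def by simp
  have finD: "finite D" using D(1) fin finite_subset by blast
  have w2D: "w2 \<in> D"
  proof (rule forced[OF D(2) D(1) N3D(3)[OF u0]])
    show "N u0 \<inter> (V - X) \<subseteq> {w2}" using u0 X_def by blast
  qed
  have w1D: "w1 \<in> D"
  proof (rule forced[OF D(2) D(1)])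
    show "u1 \<in> V" using nbV[OF u1(1)] by simp
    show "N u1 \<inter> (V - X) \<subseteq> {w1}" using X_def by blast
  qed
  have LD: "L u \<in> D" if "u \<in> N3" for u
  proof (rule forced[OF D(2) D(1) S(3)[OF that]])
    show "N (S u) \<inter> (V - X) \<subseteq> {L u}" using that X_def by blast
  qed
  have zD: "zf u \<notin> D" if "u \<in> N3" for u
  proof -
    have "zf u \<in> X" using zf(1,2)[OF that] that X_def by blast
    then show ?thesis using D(1) by blast
  qed
  define A where "A = insert w2 (L ` N3)"
  define D' where "D' = (D - A) \<union> zf ` N3"
  have "TD_set T D'"
  proof (rule TD_intro)
    show "D' \<subseteq> V" using D(1) zf(4) D'_def by blast
    show "\<forall>y\<in>V. \<exists>d\<in>D'. d \<in> N y"
    proof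
      fix y assume y: "y \<in> V"
      obtain d where d: "d \<in> D" "d \<in> N y" using TD_elim[OF TDD y] by blast
      show "\<exists>d\<in>D'. d \<in> N y"
      proof (cases "d \<in> A")
        case False then show ?thesis using d D'_def by blast
      next
        case True
        then consider "d = w2" | u where "u \<in> N3" "d = L u" using A_def by blast
        then show ?thesis
        proof cases
          case 1
          then have yn: "y \<in> N w2" using nbsym[OF d(2)] by simp
          then have "h y = 1 \<or> h y = 3" using V2_nb[OF w(5)] by blast
          then show ?thesis
          proof
            assume "h y = 1"
            then have "y = s" using uq2[OF yn] by blast
            moreover have "w1 \<notin> A" using A_def w(3) L(4) w(4) by auto
            ultimately show ?thesis using w1D w(1) D'_def by blast
          next
            assume "h y = 3"
            then have "y \<in> N3" using yn N3_def by blast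
            then show ?thesis using zf(1)[OF \<open>y \<in> N3\<close>] D'_def by blast
          qed
        next
          case 2
          then have "y = S u" using nbsym[OF d(2)] L(3)[OF 2(1)] by blast
          then show ?thesis using S(4)[OF 2(1)] 2(1) D'_def by blast
        qed
      qed
    qed
  qed
  then have le: "card D \<le> card D'" using unmixed_le[OF um D(2)] by blast
  have finN3: "finite N3" using finite_subset[of N3 "N w2"] finite_nbhd[OF wf] N3_def by blast
  have injL: "inj_on L N3"
  proof (rule inj_onI)
    fix u u' assume uu: "u \<in> N3" "u' \<in> N3" "L u = L u'"
    then have SS: "S u = S u'" using L(3) by (metis singleton_inject)
    show "u = u'"
    proof (rule ccontr)
      assume ne: "u \<noteq> u'"
      have a: "ra T w2 u (zf u)" using ra1[OF ra0[OF N3D(3)[OF uu(1)]] nbsym[OF zf(1)[OF uu(1)]]] N3D(2)[OF uu(1)] w(5) zf(2)[OF uu(1)] by force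
      have b: "ra T w2 u (S u)" using ra1[OF a S(4)[OF uu(1)]] S(2)[OF uu(1)] w(5) by force
      have c: "ra T w2 u (zf u')" using ra1[OF b[unfolded SS] S(1)[OF uu(2)] zf(2)[OF uu(2)]] .
      have d: "ra T w2 u u'" using ra1[OF c zf(1)[OF uu(2)]] N3D(2)[OF uu(2)] w(5) by force
      show False using cyc[OF N3D(1)[OF uu(1)] N3D(1)[OF uu(2)] ne d] .
    qed
  qed
  have cA: "card A = Suc (card N3)"
  proof -
    have "w2 \<notin> L ` N3" using L(4) w(5) by force
    then show ?thesis unfolding A_def using card_image[OF injL] finN3 by simp
  qed
  have AD: "A \<subseteq> D" using w2D LD A_def by blast
  have "card (D - A) = card D - card A" using card_Diff_subset[OF finite_subset[OF AD finD] AD] .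
  moreover have "card A \<le> card D" using card_mono[OF finD AD] .
  moreover have "card D' \<le> card (D - A) + card (zf ` N3)" unfolding D'_def by (rule card_Un_le)
  moreover have "card (zf ` N3) \<le> card N3" using card_image_le[OF finN3] .
  ultimately show False using le cA by linarith
qed

end

lemma reach_prepend:
  assumes wf: "wf_graph G" and r: "reach_leaf G y n" and yx: "y \<in> nbhd G x" shows "reach_leaf G x (Suc n)"
proof -
  obtain l xs where l: "leaf G l" "walk G xs" "hd xs = y" "last xs = l" "length xs = Suc n"
    using r unfolding reach_leaf_def by blast
  have ne: "xs \<noteq> []" using walk_nonempty[OF l(2)] .
  have xv: "x \<in> verts G" using nbhd_in_verts[OF wf yx] .
  have e: "{x, y} \<in> edges G" using yx unfolding nbhd_def by (simp add: insert_commute)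
  have "walk G (x # xs)" using xv e l(2,3) ne by (simp add: walk_Cons)
  moreover have "last (x # xs) = l" using l(4) ne by simp
  ultimately show ?thesis unfolding reach_leaf_def using l(1,5) by (intro exI[of _ l] exI[of _ "x # xs"]) simp
qed

lemma conn_closed:
  assumes c: "connected_graph G" and wf: "wf_graph G"
    and X: "X \<subseteq> verts G" "X \<noteq> {}" "\<forall>x\<in>X. nbhd G x \<subseteq> X"
  shows "X = verts G"
proof
  show "X \<subseteq> verts G" by fact
  show "verts G \<subseteq> X"
  proof
    fix y assume y: "y \<in> verts G"
    obtain x where x: "x \<in> X" using X(2) by blast
    then obtain xs where xs: "walk G xs" "hd xs = x" "last xs = y"
      using c y X(1) unfolding connected_graph_def by blast
    have ne: "xs \<noteq> []" using walk_nonempty[OF xs(1)] .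
    have "\<forall>i<length xs. xs ! i \<in> X"
    proof (intro allI impI)
      fix i assume "i < length xs"
      then show "xs ! i \<in> X"
      proof (induction i)
        case 0 then show ?case using xs(2) x ne by (simp add: hd_conv_nth)
      next
        case (Suc i)
        then have a: "xs ! i \<in> X" by simp
        have e: "{xs ! i, xs ! Suc i} \<in> edges G" using walk_edge_nth[OF xs(1) Suc.prems] .
        have v: "xs ! Suc i \<in> verts G" using walk_nth_verts[OF xs(1) Suc.prems] .
        have "xs ! Suc i \<in> nbhd G (xs ! i)" using e v unfolding nbhd_def by (simp add: insert_commute)
        then show ?case using X(3) a by blast
      qed
    qed
    moreover have "last xs = xs ! (length xs - 1)" using ne by (simp add: last_conv_nth)
    moreover have "length xs - 1 < length xs" using ne by simp
    ultimately show "y \<in> X" using xs(3) by metis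
  qed
qed

lemma from_assms:
  assumes bal: "balanced_tree T" and gh: "gheight T = 3"
  shows "htree T"
proof -
  have tr: "is_tree T" using bal by (simp add: balanced_tree_def)
  have wf: "wf_graph T" and ne: "verts T \<noteq> {}" and con: "connected_graph T" and ac: "\<not> has_cycle T"
    using tr unfolding is_tree_def by simp_all
  have fin: "finite (verts T)" using wf by (simp add: wf_graph_def)
  have mx: "Max (vheight T ` verts T) = 3" using gh by (simp add: gheight_def)
  have le3: "\<forall>x\<in>verts T. vheight T x \<le> 3" using Max_ge[of "vheight T ` verts T"] fin mx by simp
  have e3: "\<exists>x\<in>verts T. vheight T x = 3"
  proof -
    have "Max (vheight T ` verts T) \<in> vheight T ` verts T" using Max_in[of "vheight T ` verts T"] fin ne by simp
    then show ?thesis using mx by (simp add: image_iff)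
  qed
  have cc: "\<forall>X. X \<subseteq> verts T \<longrightarrow> X \<noteq> {} \<longrightarrow> (\<forall>x\<in>X. nbhd T x \<subseteq> X) \<longrightarrow> X = verts T"
    using conn_closed[OF con wf] by blast
  define R where "R = {x \<in> verts T. \<exists>n. reach_leaf T x n}"
  have "R = verts T"
  proof (rule conn_closed[OF con wf])
    show "R \<subseteq> verts T" using R_def by blast
    obtain z where z: "z \<in> verts T" "vheight T z = 3" using e3 by blast
    then have "\<exists>n. reach_leaf T z n" unfolding vheight_alt by (cases "\<exists>n. reach_leaf T z n") simp_all
    then show "R \<noteq> {}" using z R_def by blast
    show "\<forall>x\<in>R. nbhd T x \<subseteq> R"
    proof (intro ballI subsetI)
      fix x y assume x: "x \<in> R" and y: "y \<in> nbhd T x"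
      obtain n where "reach_leaf T x n" using x R_def by blast
      moreover have "x \<in> verts T" using x unfolding R_def by blast
      moreover have "x \<in> nbhd T y" using nbhd_sym[OF y] calculation(2) by simp
      ultimately have "reach_leaf T y (Suc n)" using reach_prepend[OF wf] by blast
      moreover have "y \<in> verts T" using y by (simp add: nbhd_def)
      ultimately show "y \<in> R" unfolding R_def by blast
    qed
  qed
  then have rw: "reach_leaf T x (vheight T x)" if "x \<in> verts T" for x
  proof -
    have "x \<in> R" using that \<open>R = verts T\<close> by simp
    then obtain n where "reach_leaf T x n" unfolding R_def by blast
    then show ?thesis using vheight_wit[of T x n] by simp
  qed
  have c0: "vheight T x \<le> Suc (vheight T y)" if "x \<in> verts T" "y \<in> nbhd T x" for x y
  proof -
    have yv: "y \<in> verts T" using that(2) by (simp add: nbhd_def)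
    have "True" by simp
    have "reach_leaf T x (Suc (vheight T y))" using reach_prepend[OF wf rw[OF yv] that(2)] .
    then show ?thesis by (rule vheight_le)
  qed
  have hA: "\<forall>x\<in>verts T. vheight T x = 0 \<longleftrightarrow> leaf T x"
  proof (intro ballI iffI)
    fix x assume x: "x \<in> verts T" and "vheight T x = 0"
    then have "reach_leaf T x 0" using rw[OF x] by simp
    then obtain l xs where l: "leaf T l" "walk T xs" "hd xs = x" "last xs = l" "length xs = Suc 0"
      unfolding reach_leaf_def by blast
    then obtain a where "xs = [a]" by (metis length_0_conv length_Suc_conv)
    then show "leaf T x" using l by simp
  next
    fix x assume x: "x \<in> verts T" and "leaf T x"
    then have "reach_leaf T x 0" unfolding reach_leaf_def by (intro exI[of _ x] exI[of _ "[x]"]) simp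
    then show "vheight T x = 0" using vheight_le[of T x 0] by simp
  qed
  have hB: "\<forall>x\<in>verts T. 0 < vheight T x \<longrightarrow> (\<exists>y\<in>nbhd T x. Suc (vheight T y) = vheight T x)"
  proof (intro ballI impI)
    fix x assume x: "x \<in> verts T" and pos: "0 < vheight T x"
    obtain n where n: "vheight T x = Suc n" using pos by (metis gr0_implies_Suc)
    obtain l xs where l: "leaf T l" "walk T xs" "hd xs = x" "last xs = l" "length xs = Suc (Suc n)"
      using rw[OF x] unfolding n reach_leaf_def by blast
    then obtain a y ys where xs: "xs = a # y # ys" by (metis length_Suc_conv)
    have a: "a = x" using xs l(3) by simp
    have w: "{x, y} \<in> edges T" "walk T (y # ys)" using l(2) unfolding xs a by simp_all
    have yv: "y \<in> verts T" using walk_nth_verts[OF w(2), of 0] by simp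
    have yn: "y \<in> nbhd T x" using w(1) yv unfolding nbhd_def by (simp add: insert_commute)
    have "reach_leaf T y n" unfolding reach_leaf_def using l xs w(2)
      by (intro exI[of _ l] exI[of _ "y # ys"]) simp
    then have "vheight T y \<le> n" by (rule vheight_le)
    moreover have "vheight T x \<le> Suc (vheight T y)" using c0[OF x yn] .
    ultimately have "Suc (vheight T y) = vheight T x" using n by linarith
    then show "\<exists>y\<in>nbhd T x. Suc (vheight T y) = vheight T x" using yn by blast
  qed
  have hC: "\<forall>x\<in>verts T. \<forall>y\<in>nbhd T x. vheight T x = Suc (vheight T y) \<or> vheight T y = Suc (vheight T x)"
  proof (intro ballI)
    fix x y assume x: "x \<in> verts T" and y: "y \<in> nbhd T x"
    have yv: "y \<in> verts T" using y by (simp add: nbhd_def)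
    have xy: "x \<in> nbhd T y" using nbhd_sym[OF y x] .
    have "{x, y} \<in> edges T" using y unfolding nbhd_def by (simp add: insert_commute)
    then have "vheight T x \<noteq> vheight T y" using bal x yv unfolding balanced_tree_def by blast
    then show "vheight T x = Suc (vheight T y) \<or> vheight T y = Suc (vheight T x)"
      using c0[OF x y] c0[OF yv xy] by linarith
  qed
  show ?thesis
    unfolding htree_def by (intro conjI) fact+
qed

locale gtree = htree +
  assumes s1: "\<forall>x\<in>verts T. vheight T x = 1 \<longrightarrow> (\<forall>a b. a \<in> nbhd T x \<longrightarrow> b \<in> nbhd T x \<longrightarrow> vheight T a = 2 \<longrightarrow> vheight T b = 2 \<longrightarrow> a = b)"
    and s2: "\<forall>x\<in>verts T. vheight T x = 2 \<longrightarrow> (\<forall>a b. a \<in> nbhd T x \<longrightarrow> b \<in> nbhd T x \<longrightarrow> vheight T a = 1 \<longrightarrow> vheight T b = 1 \<longrightarrow> a = b)"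

lemma (in htree) to_gtree: assumes um: "unmixed T" shows "gtree T"
proof
  show "\<forall>x\<in>V. h x = 1 \<longrightarrow> (\<forall>a b. a \<in> N x \<longrightarrow> b \<in> N x \<longrightarrow> h a = 2 \<longrightarrow> h b = 2 \<longrightarrow> a = b)"
  proof (intro ballI impI allI)
    fix x a b assume "x \<in> V" "h x = 1" "a \<in> N x" "b \<in> N x" "h a = 2" "h b = 2"
    then show "a = b" using case_a[OF um \<open>x \<in> V\<close> \<open>h x = 1\<close> \<open>a \<in> N x\<close> \<open>b \<in> N x\<close>] by blast
  qed
  show "\<forall>x\<in>V. h x = 2 \<longrightarrow> (\<forall>a b. a \<in> N x \<longrightarrow> b \<in> N x \<longrightarrow> h a = 1 \<longrightarrow> h b = 1 \<longrightarrow> a = b)"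
  proof (intro ballI impI allI)
    fix x a b assume "x \<in> V" "h x = 2" "a \<in> N x" "b \<in> N x" "h a = 1" "h b = 1"
    then show "a = b" using case_b[OF um \<open>x \<in> V\<close> \<open>h x = 2\<close> \<open>a \<in> N x\<close> \<open>b \<in> N x\<close>] by blast
  qed
qed

lemma path_verts: "verts (path_graph n) = {0..n}" by (simp add: path_graph_def verts_def)

lemma path_edges: "{a, b} \<in> edges (path_graph n) \<longleftrightarrow> a \<le> n \<and> b \<le> n \<and> (a = Suc b \<or> b = Suc a)"
proof
  assume "{a, b} \<in> edges (path_graph n)"
  then obtain i where i: "i \<in> {1..n}" "{a, b} = {i - 1, i}" by (auto simp: path_graph_def edges_def)
  then show "a \<le> n \<and> b \<le> n \<and> (a = Suc b \<or> b = Suc a)" by (auto simp: doubleton_eq_iff)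
next
  assume a: "a \<le> n \<and> b \<le> n \<and> (a = Suc b \<or> b = Suc a)"
  show "{a, b} \<in> edges (path_graph n)"
  proof (cases "a = Suc b")
    case True
    then have "{a, b} = {a - 1, a}" "a \<in> {1..n}" using a by auto
    then show ?thesis unfolding path_graph_def edges_def by auto
  next
    case False
    then have "b = Suc a" using a by simp
    then have "{a, b} = {b - 1, b}" "b \<in> {1..n}" using a by auto
    then show ?thesis unfolding path_graph_def edges_def by auto
  qed
qed

lemma path_wf: "wf_graph (path_graph n)"
  unfolding wf_graph_def
proof (intro conjI ballI)
  show "finite (verts (path_graph n))" by (simp add: path_verts)
  fix e assume "e \<in> edges (path_graph n)"
  then obtain i where i: "i \<in> {1..n}" "e = {i - 1, i}" by (auto simp: path_graph_def edges_def)
  then show "\<exists>u v. e = {u, v} \<and> u \<noteq> v \<and> u \<in> verts (path_graph n) \<and> v \<in> verts (path_graph n)"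
    by (intro exI[of _ "i - 1"] exI[of _ i]) (auto simp: path_verts)
qed

definition mfresh :: "nat graph \<Rightarrow> nat" where "mfresh G = Suc (Max (verts G))"

lemma app_verts: "verts (add_pendant_path G k x) = verts G \<union> {mfresh G..mfresh G + k}"
  by (simp add: add_pendant_path_def Let_def verts_def mfresh_def)

lemma app_edges: "edges (add_pendant_path G k x) =
   edges G \<union> {{mfresh G + i - 1, mfresh G + i} | i. i \<in> {1..k}} \<union> {{mfresh G + k, x}}"
  by (simp add: add_pendant_path_def Let_def edges_def mfresh_def)

lemma lt_mfresh: "finite (verts G) \<Longrightarrow> a \<in> verts G \<Longrightarrow> a < mfresh G"
  unfolding mfresh_def using Max_ge by (simp add: le_imp_less_Suc)

lemma app_edge1:
  assumes wf: "wf_graph G" and x: "x \<in> verts G" and ab: "a \<in> verts G" "b \<in> verts G"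
  shows "{a, b} \<in> edges (add_pendant_path G k x) \<longleftrightarrow> {a, b} \<in> edges G"
proof -
  have fin: "finite (verts G)" using wf by (simp add: wf_graph_def)
  have lt: "a < mfresh G" "b < mfresh G" using lt_mfresh[OF fin] ab by auto
  have "{a, b} \<noteq> {mfresh G + i - 1, mfresh G + i}" if "i \<in> {1..k}" for i
    using lt that by (auto simp: doubleton_eq_iff)
  moreover have "{a, b} \<noteq> {mfresh G + k, x}" using lt by (auto simp: doubleton_eq_iff)
  ultimately show ?thesis unfolding app_edges by blast
qed

lemma app_edge2:
  assumes wf: "wf_graph G" and x: "x \<in> verts G" and ij: "i \<le> k" "j \<le> k"
  shows "{mfresh G + i, mfresh G + j} \<in> edges (add_pendant_path G k x) \<longleftrightarrow> (j + 1 = i \<or> i + 1 = j)"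
proof -
  let ?m = "mfresh G"
  have fin: "finite (verts G)" using wf by (simp add: wf_graph_def)
  have lx: "x < ?m" using lt_mfresh[OF fin x] .
  have notG: "{?m + i, ?m + j} \<notin> edges G"
  proof
    assume "{?m + i, ?m + j} \<in> edges G"
    then have "?m + i \<in> verts G" using wf_edge[OF wf] by blast
    then show False using lt_mfresh[OF fin] by fastforce
  qed
  have notx: "{?m + i, ?m + j} \<noteq> {?m + k, x}" using lx by (auto simp: doubleton_eq_iff)
  have "(\<exists>i'\<in>{1..k}. {?m + i, ?m + j} = {?m + i' - 1, ?m + i'}) \<longleftrightarrow> (j + 1 = i \<or> i + 1 = j)"
  proof
    assume "\<exists>i'\<in>{1..k}. {?m + i, ?m + j} = {?m + i' - 1, ?m + i'}"
    then obtain i' where "i' \<in> {1..k}" "{?m + i, ?m + j} = {?m + i' - 1, ?m + i'}" by blast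
    then show "j + 1 = i \<or> i + 1 = j" by (auto simp: doubleton_eq_iff)
  next
    assume "j + 1 = i \<or> i + 1 = j"
    then show "\<exists>i'\<in>{1..k}. {?m + i, ?m + j} = {?m + i' - 1, ?m + i'}"
    proof
      assume "j + 1 = i" then show ?thesis using ij by (intro bexI[of _ i]) (auto simp: insert_commute)
    next
      assume "i + 1 = j" then show ?thesis using ij by (intro bexI[of _ j]) auto
    qed
  qed
  then show ?thesis unfolding app_edges using notG notx by blast
qed

lemma app_edge3:
  assumes wf: "wf_graph G" and x: "x \<in> verts G" and i: "i \<le> k" and b: "b \<in> verts G"
  shows "{mfresh G + i, b} \<in> edges (add_pendant_path G k x) \<longleftrightarrow> (i = k \<and> b = x)"
proof -
  let ?m = "mfresh G"
  have fin: "finite (verts G)" using wf by (simp add: wf_graph_def)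
  have lb: "b < ?m" using lt_mfresh[OF fin b] .
  have lx: "x < ?m" using lt_mfresh[OF fin x] .
  have notG: "{?m + i, b} \<notin> edges G"
  proof
    assume "{?m + i, b} \<in> edges G"
    then have "?m + i \<in> verts G" using wf_edge[OF wf] by blast
    then show False using lt_mfresh[OF fin] by fastforce
  qed
  have np: "{?m + i, b} \<noteq> {?m + i' - 1, ?m + i'}" if "i' \<in> {1..k}" for i'
    using lb that by (auto simp: doubleton_eq_iff)
  have "{?m + i, b} = {?m + k, x} \<longleftrightarrow> (i = k \<and> b = x)" using lb lx by (auto simp: doubleton_eq_iff)
  then show ?thesis unfolding app_edges using notG np by blast
qed

lemma app_wf:
  assumes wf: "wf_graph G" and x: "x \<in> verts G"
  shows "wf_graph (add_pendant_path G k x)"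
proof -
  let ?m = "mfresh G"
  have fin: "finite (verts G)" using wf by (simp add: wf_graph_def)
  have lx: "x < ?m" using lt_mfresh[OF fin x] .
  show ?thesis unfolding wf_graph_def
  proof (intro conjI ballI)
    show "finite (verts (add_pendant_path G k x))" using fin by (simp add: app_verts)
    fix e assume "e \<in> edges (add_pendant_path G k x)"
    then consider "e \<in> edges G" | i where "i \<in> {1..k}" "e = {?m + i - 1, ?m + i}" | "e = {?m + k, x}"
      unfolding app_edges by blast
    then show "\<exists>u v. e = {u, v} \<and> u \<noteq> v \<and> u \<in> verts (add_pendant_path G k x) \<and> v \<in> verts (add_pendant_path G k x)"
    proof cases
      case 1 then show ?thesis using wf unfolding wf_graph_def app_verts by blast
    next
      case 2 then show ?thesis by (intro exI[of _ "?m + i - 1"] exI[of _ "?m + i"]) (auto simp: app_verts)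
    next
      case 3 then show ?thesis using lx x by (intro exI[of _ "?m + k"] exI[of _ x]) (auto simp: app_verts)
    qed
  qed
qed

lemma vheight_pos_in: "vheight G v \<noteq> 0 \<Longrightarrow> v \<in> verts G"
proof -
  assume "vheight G v \<noteq> 0"
  then obtain n where "reach_leaf G v n" unfolding vheight_alt by (cases "\<exists>n. reach_leaf G v n") auto
  then obtain xs where "walk G xs" "hd xs = v" unfolding reach_leaf_def by blast
  then show ?thesis using walk_nth_verts[of G xs 0] walk_nonempty[of G xs] by (simp add: hd_conv_nth)
qed

lemma opO_wf: assumes "wf_graph G" shows "wf_graph (opO G v)"
proof (cases "vheight G v = 0")
  case True then show ?thesis using assms unfolding opO_def by simp
next
  case False
  then have "v \<in> verts G" by (rule vheight_pos_in)
  then show ?thesis using assms app_wf unfolding opO_def by simp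
qed

lemma opO_seq_wf: "wf_graph G \<Longrightarrow> wf_graph (opO_seq G vs)"
  by (induction vs arbitrary: G) (simp_all add: opO_wf)

lemma opO_seq_snoc: "opO_seq G (vs @ [v]) = opO (opO_seq G vs) v"
  by (induction vs arbitrary: G) simp_all

lemma valid_snoc: "valid_O_seq G (vs @ [v]) \<longleftrightarrow>
   valid_O_seq G vs \<and> v \<in> verts (opO_seq G vs) \<and> vheight (opO_seq G vs) v \<in> {1, 2, 3}"
  by (induction vs arbitrary: G) auto

definition del :: "'a graph \<Rightarrow> 'a set \<Rightarrow> 'a graph" where
  "del T P = (verts T - P, {e \<in> edges T. e \<inter> P = {}})"

lemma del_verts: "verts (del T P) = verts T - P" by (simp add: del_def verts_def)
lemma del_edges: "edges (del T P) = {e \<in> edges T. e \<inter> P = {}}" by (simp add: del_def edges_def)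

lemma del_nbhd: "x \<notin> P \<Longrightarrow> nbhd (del T P) x = nbhd T x - P"
  unfolding nbhd_def del_verts del_edges by auto

lemma walk_mono: assumes "verts G \<subseteq> verts H" "edges G \<subseteq> edges H" "walk G xs" shows "walk H xs"
  using assms unfolding walk_def by blast

lemma edge_iff_nbhd: assumes "wf_graph G" "b \<in> verts G" shows "{a, b} \<in> edges G \<longleftrightarrow> a \<in> nbhd G b"
  using wf_edge[OF assms(1), of a b] assms(2) unfolding nbhd_def by blast

lemma iso_extend:
  assumes wfT: "wf_graph T" and wfG: "wf_graph G" and iso: "isof (del T (p ` {0..k})) G f"
    and injp: "inj_on p {0..k}" and Psub: "p ` {0..k} \<subseteq> verts T"
    and v: "v \<in> verts T" "v \<notin> p ` {0..k}"
    and nb: "\<forall>i\<le>k. nbhd T (p i) = {p j |j. j \<le> k \<and> (j + 1 = i \<or> i + 1 = j)} \<union> (if i = k then {v} else {})"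
  shows "graph_iso T (add_pendant_path G k (f v))"
proof -
  define P where "P = p ` {0..k}"
  define m where "m = mfresh G"
  define g where "g = the_inv_into {0..k} p"
  define f' where "f' x = (if x \<in> P then m + g x else f x)" for x
  let ?H = "add_pendant_path G k (f v)"
  have finG: "finite (verts G)" using wfG by (simp add: wf_graph_def)
  have gp: "g (p i) = i" if "i \<le> k" for i using the_inv_into_f_f[OF injp] that g_def by simp
  have pg: "g x \<le> k" if xP: "x \<in> P" for x
  proof -
    obtain i where "i \<le> k" "x = p i" using xP P_def by auto
    then show ?thesis using gp by simp
  qed
  have bf: "bij_betw f (verts T - P) (verts G)" using iso unfolding isof_def del_verts P_def by simp
  have ef: "\<forall>a\<in>verts T - P. \<forall>b\<in>verts T - P. {a, b} \<in> edges (del T P) \<longleftrightarrow> {f a, f b} \<in> edges G"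
    using iso unfolding isof_def del_verts P_def by simp
  have vVP: "v \<in> verts T - P" using v P_def by simp
  have fvG: "f v \<in> verts G" using bf vVP bij_betwE by blast
  have fG: "f a \<in> verts G" if "a \<in> verts T - P" for a using bf that bij_betwE by blast
  have finj: "f a = f b \<longleftrightarrow> a = b" if "a \<in> verts T - P" "b \<in> verts T - P" for a b
    using bf that unfolding bij_betw_def inj_on_def by blast
  have b1: "bij_betw f' (verts T - P) (verts G)"
    using bf by (rule bij_betw_cong[THEN iffD1, rotated]) (simp add: f'_def)
  have b2: "bij_betw f' P {m..m + k}"
  proof -
    have "bij_betw (\<lambda>i. m + i) {0..k} {m..m + k}"
      unfolding bij_betw_def inj_on_def by (auto simp: image_iff intro: bexI[of _ "_ - m"])
    moreover have "bij_betw g P {0..k}" unfolding g_def P_def using bij_betw_the_inv_into[OF inj_on_imp_bij_betw[OF injp]] .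
    ultimately have "bij_betw ((\<lambda>i. m + i) \<circ> g) P {m..m + k}" using bij_betw_trans by blast
    then show ?thesis by (rule bij_betw_cong[THEN iffD1, rotated]) (simp add: f'_def)
  qed
  have disj: "verts G \<inter> {m..m + k} = {}" using lt_mfresh[OF finG] m_def by fastforce
  have "bij_betw f' ((verts T - P) \<union> P) (verts G \<union> {m..m + k})"
    by (rule bij_betw_combine[OF b1 b2 disj])
  moreover have "(verts T - P) \<union> P = verts T" using Psub P_def by blast
  ultimately have bij: "bij_betw f' (verts T) (verts ?H)" by (simp add: app_verts m_def)
  have nbP: "b \<in> nbhd T (p i) \<longleftrightarrow> ((\<exists>j\<le>k. b = p j \<and> (j + 1 = i \<or> i + 1 = j)) \<or> (i = k \<and> b = v))"
    if "i \<le> k" for i b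
    using nb that by auto
  have eP: "{p i, b} \<in> edges T \<longleftrightarrow> b \<in> nbhd T (p i)" if "i \<le> k" "b \<in> verts T" for i b
  proof -
    have "p i \<in> verts T" using Psub that(1) by auto
    then show ?thesis using edge_iff_nbhd[OF wfT, of "p i" b] by (simp add: insert_commute)
  qed
  have case_PP: "{p i, p j} \<in> edges T \<longleftrightarrow> {f' (p i), f' (p j)} \<in> edges ?H" if "i \<le> k" "j \<le> k" for i j
  proof -
    have "{p i, p j} \<in> edges T \<longleftrightarrow> (j + 1 = i \<or> i + 1 = j)"
    proof -
      have "p j \<in> verts T" using Psub that by auto
      then have "{p i, p j} \<in> edges T \<longleftrightarrow> p j \<in> nbhd T (p i)" using eP that by blast
      also have "\<dots> \<longleftrightarrow> (j + 1 = i \<or> i + 1 = j)"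
      proof -
        have "p j \<noteq> v" using v that by auto
        moreover have "(\<exists>j'\<le>k. p j = p j' \<and> (j' + 1 = i \<or> i + 1 = j')) \<longleftrightarrow> (j + 1 = i \<or> i + 1 = j)"
          using injp that unfolding inj_on_def by auto
        ultimately show ?thesis using nbP[OF that(1)] by blast
      qed
      finally show ?thesis .
    qed
    moreover have "f' (p i) = m + i" "f' (p j) = m + j" using gp that P_def f'_def by auto
    ultimately show ?thesis using app_edge2[OF wfG fvG that] m_def by simp
  qed
  have case_PV: "{p i, b} \<in> edges T \<longleftrightarrow> {f' (p i), f' b} \<in> edges ?H" if "i \<le> k" "b \<in> verts T - P" for i b
  proof -
    have "{p i, b} \<in> edges T \<longleftrightarrow> (i = k \<and> b = v)"
    proof -
      have "{p i, b} \<in> edges T \<longleftrightarrow> b \<in> nbhd T (p i)" using eP that by blast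
      moreover have "\<not> (\<exists>j\<le>k. b = p j \<and> (j + 1 = i \<or> i + 1 = j))" using that P_def by auto
      ultimately show ?thesis using nbP[OF that(1)] by blast
    qed
    moreover have "f' (p i) = m + i" "f' b = f b" using gp that P_def f'_def by auto
    moreover have "(i = k \<and> f b = f v) \<longleftrightarrow> (i = k \<and> b = v)" using finj[OF that(2) vVP] by blast
    ultimately show ?thesis using app_edge3[OF wfG fvG that(1) fG[OF that(2)]] m_def by simp
  qed
  have case_VV: "{a, b} \<in> edges T \<longleftrightarrow> {f' a, f' b} \<in> edges ?H" if "a \<in> verts T - P" "b \<in> verts T - P" for a b
  proof -
    have "{a, b} \<in> edges T \<longleftrightarrow> {a, b} \<in> edges (del T P)" using that unfolding del_edges by auto
    also have "\<dots> \<longleftrightarrow> {f a, f b} \<in> edges G" using ef that by blast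
    also have "\<dots> \<longleftrightarrow> {f a, f b} \<in> edges ?H" using app_edge1[OF wfG fvG fG[OF that(1)] fG[OF that(2)]] by simp
    finally show ?thesis using that f'_def by simp
  qed
  have "\<forall>a\<in>verts T. \<forall>b\<in>verts T. {a, b} \<in> edges T \<longleftrightarrow> {f' a, f' b} \<in> edges ?H"
  proof (intro ballI)
    fix a b assume ab: "a \<in> verts T" "b \<in> verts T"
    show "{a, b} \<in> edges T \<longleftrightarrow> {f' a, f' b} \<in> edges ?H"
    proof (cases "a \<in> P")
      case True
      then obtain i where i: "i \<le> k" "a = p i" using P_def by auto
      show ?thesis
      proof (cases "b \<in> P")
        case True
        then obtain j where j: "j \<le> k" "b = p j" using P_def by auto
        show ?thesis using case_PP[OF i(1) j(1)] i j by simp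
      next
        case False then show ?thesis using case_PV[OF i(1), of b] ab i by simp
      qed
    next
      case aP: False
      show ?thesis
      proof (cases "b \<in> P")
        case True
        then obtain j where j: "j \<le> k" "b = p j" using P_def by auto
        show ?thesis using case_PV[OF j(1), of a] ab j aP by (simp add: insert_commute)
      next
        case False then show ?thesis using case_VV[of a b] ab aP by simp
      qed
    qed
  qed
  then show ?thesis unfolding graph_iso_def using bij by blast
qed

context gtree begin

lemma del_gtree:
  assumes PV: "P \<subseteq> V" and v: "v \<in> V" "v \<notin> P"
   and nP: "\<forall>x\<in>V - P. x \<noteq> v \<longrightarrow> N x \<inter> P = {}"
   and Pn: "\<forall>p\<in>P. N p \<subseteq> P \<union> {v}"
   and H1: "\<exists>y\<in>N v - P. Suc (h y) = h v"
   and H2: "\<exists>a b. a \<noteq> b \<and> a \<in> N v - P \<and> b \<in> N v - P"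
   and H3: "\<exists>x\<in>V - P. h x = 3"
  shows "gtree (del T P) \<and> (\<forall>x\<in>V - P. vheight (del T P) x = h x)"
proof -
  let ?T = "del T P"
  have V': "verts ?T = V - P" by (rule del_verts)
  have Nd: "nbhd ?T x = N x - P" if "x \<in> V - P" for x using del_nbhd[of x P T] that by simp
  have Nd2: "nbhd ?T x = N x" if "x \<in> V - P" "x \<noteq> v" for x
    using Nd[OF that(1)] nP that by blast
  have wf': "wf_graph ?T"
    unfolding wf_graph_def
  proof (intro conjI ballI)
    show "finite (verts ?T)" using fin V' by simp
    fix e assume "e \<in> edges ?T"
    then have e: "e \<in> edges T" "e \<inter> P = {}" unfolding del_edges by auto
    then obtain a b where "e = {a, b}" "a \<noteq> b" "a \<in> V" "b \<in> V" using wf unfolding wf_graph_def by blast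
    then show "\<exists>a b. e = {a, b} \<and> a \<noteq> b \<and> a \<in> verts ?T \<and> b \<in> verts ?T" using e(2) V' by blast
  qed
  have acyc': "\<not> has_cycle ?T"
  proof
    assume "has_cycle ?T"
    then obtain xs where xs: "walk ?T xs" "distinct xs" "length xs \<ge> 3" "{last xs, hd xs} \<in> edges ?T"
      unfolding has_cycle_def by blast
    have "verts ?T \<subseteq> V" "edges ?T \<subseteq> edges T" using V' unfolding del_edges by auto
    then have "walk T xs" using walk_mono[OF _ _ xs(1)] by simp
    moreover have "{last xs, hd xs} \<in> edges T" using xs(4) unfolding del_edges by blast
    ultimately have "has_cycle T" using xs(2,3) unfolding has_cycle_def by blast
    then show False using acyc by blast
  qed
  have hv0: "h v \<noteq> 0" using H1 by auto
  have A: "\<forall>x\<in>verts ?T. h x = 0 \<longleftrightarrow> leaf ?T x"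
  proof
    fix x assume x: "x \<in> verts ?T"
    then have xV: "x \<in> V - P" using V' by simp
    show "h x = 0 \<longleftrightarrow> leaf ?T x"
    proof (cases "x = v")
      case True
      obtain a b where ab: "a \<noteq> b" "a \<in> N v - P" "b \<in> N v - P" using H2 by blast
      have "finite (N v - P)" using finite_nbhd[OF wf] by simp
      then have "card (N v - P) \<ge> 2" using ab card_mono[of "N v - P" "{a, b}"] by simp
      then have "\<not> leaf ?T x" using Nd[OF xV] True by (simp add: leaf_def degree_def)
      then show ?thesis using hv0 True by simp
    next
      case False
      have "leaf ?T x \<longleftrightarrow> leaf T x" using Nd2[OF xV False] x xV by (simp add: leaf_def degree_def)
      then show ?thesis using leaf_iff xV by blast
    qed
  qed
  have B: "\<forall>x\<in>verts ?T. 0 < h x \<longrightarrow> (\<exists>y\<in>nbhd ?T x. Suc (h y) = h x)"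
  proof (intro ballI impI)
    fix x assume x: "x \<in> verts ?T" "0 < h x"
    then have xV: "x \<in> V - P" using V' by simp
    show "\<exists>y\<in>nbhd ?T x. Suc (h y) = h x"
    proof (cases "x = v")
      case True then show ?thesis using H1 Nd[OF xV] by simp
    next
      case False then show ?thesis using descend[of x] x(2) xV Nd2[OF xV False] by simp
    qed
  qed
  have C: "\<forall>x\<in>verts ?T. \<forall>y\<in>nbhd ?T x. h x \<le> Suc (h y)"
  proof (intro ballI)
    fix x y assume "x \<in> verts ?T" "y \<in> nbhd ?T x"
    then have "y \<in> N x" using Nd V' by auto
    then show "h x \<le> Suc (h y)" using nbh[of y x] by linarith
  qed
  have hgt: "\<forall>x\<in>V - P. vheight ?T x = h x"
  proof
    fix x assume "x \<in> V - P"
    then have "x \<in> verts ?T" using V' by simp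
    then show "vheight ?T x = h x" by (rule height_char[OF A B C])
  qed
  have nbT: "y \<in> V - P" if "x \<in> V - P" "y \<in> nbhd ?T x" for x y
    using that Nd nbV by blast
  have cc': "\<forall>X. X \<subseteq> verts ?T \<longrightarrow> X \<noteq> {} \<longrightarrow> (\<forall>x\<in>X. nbhd ?T x \<subseteq> X) \<longrightarrow> X = verts ?T"
  proof (intro allI impI)
    fix X assume X: "X \<subseteq> verts ?T" "X \<noteq> {}" "\<forall>x\<in>X. nbhd ?T x \<subseteq> X"
    have XV: "X \<subseteq> V - P" using X(1) V' by simp
    show "X = verts ?T"
    proof (cases "v \<in> X")
      case True
      have "X \<union> P = V"
      proof (rule cconn')
        show "X \<union> P \<subseteq> V" using XV PV by blast
        show "X \<union> P \<noteq> {}" using X(2) by blast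
        show "\<forall>x\<in>X \<union> P. N x \<subseteq> X \<union> P"
        proof
          fix x assume "x \<in> X \<union> P"
          then show "N x \<subseteq> X \<union> P"
          proof
            assume xX: "x \<in> X"
            then have "N x - P \<subseteq> X" using X(3) Nd XV by blast
            then show ?thesis by blast
          next
            assume "x \<in> P" then show ?thesis using Pn True by blast
          qed
        qed
      qed
      then show ?thesis using XV V' by blast
    next
      case False
      have "X = V"
      proof (rule cconn')
        show "X \<subseteq> V" using XV by blast
        show "X \<noteq> {}" by fact
        show "\<forall>x\<in>X. N x \<subseteq> X"
        proof
          fix x assume xX: "x \<in> X"
          then have "x \<noteq> v" using False by blast
          then show "N x \<subseteq> X" using Nd2[of x] XV xX X(3) by blast
        qed
      qed
      then show ?thesis using XV V' by blast
    qed
  qed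
  have g: "gtree ?T"
    unfolding gtree_def htree_def gtree_axioms_def
  proof (intro conjI)
    show "wf_graph ?T" by fact
    show "\<not> has_cycle ?T" by fact
    show "\<forall>X. X \<subseteq> verts ?T \<longrightarrow> X \<noteq> {} \<longrightarrow> (\<forall>x\<in>X. nbhd ?T x \<subseteq> X) \<longrightarrow> X = verts ?T" by fact
    show "\<forall>x\<in>verts ?T. vheight ?T x = 0 \<longleftrightarrow> leaf ?T x" using A hgt V' by simp
    show "\<forall>x\<in>verts ?T. 0 < vheight ?T x \<longrightarrow> (\<exists>y\<in>nbhd ?T x. Suc (vheight ?T y) = vheight ?T x)"
    proof (intro ballI impI)
      fix x assume x: "x \<in> verts ?T" "0 < vheight ?T x"
      then have xV: "x \<in> V - P" using V' by simp
      then obtain y where y: "y \<in> nbhd ?T x" "Suc (h y) = h x" using B x hgt by auto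
      have "vheight ?T y = h y" "vheight ?T x = h x" using hgt nbT[OF xV y(1)] xV by auto
      then show "\<exists>y\<in>nbhd ?T x. Suc (vheight ?T y) = vheight ?T x" using y by metis
    qed
    show "\<forall>x\<in>verts ?T. \<forall>y\<in>nbhd ?T x. vheight ?T x = Suc (vheight ?T y) \<or> vheight ?T y = Suc (vheight ?T x)"
    proof (intro ballI)
      fix x y assume x: "x \<in> verts ?T" and y: "y \<in> nbhd ?T x"
      then have xV: "x \<in> V - P" using V' by simp
      have "y \<in> N x" using y Nd[OF xV] by simp
      then show "vheight ?T x = Suc (vheight ?T y) \<or> vheight ?T y = Suc (vheight ?T x)"
        using nbh hgt xV nbT[OF xV y] by simp
    qed
    show "\<forall>x\<in>verts ?T. vheight ?T x \<le> 3" using hgt V' hle3 by simp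
    show "\<exists>x\<in>verts ?T. vheight ?T x = 3" using hgt V' H3 by auto
    show "\<forall>x\<in>verts ?T. vheight ?T x = 1 \<longrightarrow> (\<forall>a b. a \<in> nbhd ?T x \<longrightarrow> b \<in> nbhd ?T x \<longrightarrow> vheight ?T a = 2 \<longrightarrow> vheight ?T b = 2 \<longrightarrow> a = b)"
    proof (intro ballI impI allI)
      fix x a b assume x: "x \<in> verts ?T" "vheight ?T x = 1" and ab: "a \<in> nbhd ?T x" "b \<in> nbhd ?T x" "vheight ?T a = 2" "vheight ?T b = 2"
      then have xV: "x \<in> V - P" using V' by simp
      have "a \<in> N x" "b \<in> N x" "h a = 2" "h b = 2" "h x = 1"
        using ab x Nd[OF xV] hgt nbT[OF xV] xV by auto
      then show "a = b" using s1 xV by blast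
    qed
    show "\<forall>x\<in>verts ?T. vheight ?T x = 2 \<longrightarrow> (\<forall>a b. a \<in> nbhd ?T x \<longrightarrow> b \<in> nbhd ?T x \<longrightarrow> vheight ?T a = 1 \<longrightarrow> vheight ?T b = 1 \<longrightarrow> a = b)"
    proof (intro ballI impI allI)
      fix x a b assume x: "x \<in> verts ?T" "vheight ?T x = 2" and ab: "a \<in> nbhd ?T x" "b \<in> nbhd ?T x" "vheight ?T a = 1" "vheight ?T b = 1"
      then have xV: "x \<in> V - P" using V' by simp
      have "a \<in> N x" "b \<in> N x" "h a = 1" "h b = 1" "h x = 2"
        using ab x Nd[OF xV] hgt nbT[OF xV] xV by auto
      then show "a = b" using s2 xV by blast
    qed
  qed
  show ?thesis using g hgt by blast
qed

end

lemma nbset: "{p j |j. j \<le> k \<and> (j + 1 = i \<or> i + 1 = j)} =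
   (if 0 < i \<and> i \<le> Suc k then {p (i - 1)} else {}) \<union> (if i < k then {p (Suc i)} else {})"
proof -
  have "{p j |j. j \<le> k \<and> (j + 1 = i \<or> i + 1 = j)} = p ` {j. j \<le> k \<and> (j + 1 = i \<or> i + 1 = j)}" by blast
  also have "{j. j \<le> k \<and> (j + 1 = i \<or> i + 1 = j)} =
     (if 0 < i \<and> i \<le> Suc k then {i - 1} else {}) \<union> (if i < k then {Suc i} else {})" by auto
  finally show ?thesis by auto
qed

context gtree begin

lemma step:
  assumes injp: "inj_on p {0..k}" and PV: "p ` {0..k} \<subseteq> V" and v: "v \<in> V" "v \<notin> p ` {0..k}"
   and nb: "\<forall>i\<le>k. N (p i) = (if 0 < i then {p (i - 1)} else {}) \<union> (if i < k then {p (Suc i)} else {}) \<union> (if i = k then {v} else {})"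
   and hv: "(k = 0 \<and> h v = 1) \<or> (k = 3 \<and> h v = 2) \<or> (k = 2 \<and> h v = 3)"
   and H1: "\<exists>y\<in>N v - p ` {0..k}. Suc (h y) = h v"
   and H2: "\<exists>a b. a \<noteq> b \<and> a \<in> N v - p ` {0..k} \<and> b \<in> N v - p ` {0..k}"
   and H3: "\<exists>x\<in>V - p ` {0..k}. h x = 3"
   and IH: "gtree (del T (p ` {0..k})) \<Longrightarrow> \<exists>vs. valid_O_seq (path_graph 6) vs \<and> graph_iso (del T (p ` {0..k})) (opO_seq (path_graph 6) vs)"
  shows "\<exists>vs. valid_O_seq (path_graph 6) vs \<and> graph_iso T (opO_seq (path_graph 6) vs)"
proof -
  define P where "P = p ` {0..k}"
  have nb': "\<forall>i\<le>k. N (p i) = {p j |j. j \<le> k \<and> (j + 1 = i \<or> i + 1 = j)} \<union> (if i = k then {v} else {})"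
  proof (intro allI impI)
    fix i assume "i \<le> k"
    then show "N (p i) = {p j |j. j \<le> k \<and> (j + 1 = i \<or> i + 1 = j)} \<union> (if i = k then {v} else {})"
      using nb unfolding nbset by auto
  qed
  have Pn: "\<forall>q\<in>P. N q \<subseteq> P \<union> {v}"
  proof
    fix q assume "q \<in> P"
    then obtain i where i: "i \<le> k" "q = p i" using P_def by auto
    show "N q \<subseteq> P \<union> {v}" using nb' i P_def by auto
  qed
  have nP: "\<forall>x\<in>V - P. x \<noteq> v \<longrightarrow> N x \<inter> P = {}"
  proof (intro ballI impI)
    fix x assume x: "x \<in> V - P" "x \<noteq> v"
    show "N x \<inter> P = {}"
    proof (rule ccontr)
      assume "N x \<inter> P \<noteq> {}"
      then obtain q where q: "q \<in> N x" "q \<in> P" by blast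
      then have "x \<in> N q" using nbsym by blast
      then show False using Pn q(2) x by blast
    qed
  qed
  have dg: "gtree (del T P) \<and> (\<forall>x\<in>V - P. vheight (del T P) x = h x)"
    using del_gtree[of P v] PV v nP Pn H1 H2 H3 P_def by blast
  then obtain vs where vs: "valid_O_seq (path_graph 6) vs" "graph_iso (del T P) (opO_seq (path_graph 6) vs)"
    using IH P_def by blast
  define G where "G = opO_seq (path_graph 6) vs"
  obtain f where f: "isof (del T P) G f" using vs(2) G_def graph_iso_isof by blast
  have wfG: "wf_graph G" using opO_seq_wf[OF path_wf] G_def by simp
  have vT: "v \<in> verts (del T P)" unfolding del_verts using v P_def by simp
  have hfv: "vheight G (f v) = h v" using isof_vheight[OF f vT] dg v P_def by simp
  have fvG: "f v \<in> verts G" using f vT unfolding isof_def by (meson bij_betwE)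
  have op: "opO G (f v) = add_pendant_path G k (f v)" using hv hfv unfolding opO_def by auto
  have iso: "graph_iso T (add_pendant_path G k (f v))"
    using iso_extend[OF wf wfG f[unfolded P_def] injp PV v nb'] .
  have "valid_O_seq (path_graph 6) (vs @ [f v])"
    using vs(1) fvG hfv hv G_def valid_snoc by auto
  moreover have "opO_seq (path_graph 6) (vs @ [f v]) = add_pendant_path G k (f v)"
    using opO_seq_snoc op G_def by simp
  ultimately show ?thesis using iso by metis
qed

end

context htree begin

lemma base_iso:
  assumes V7: "V = {l, s, w, u, w', s', l'}"
    and n1: "N l = {s}" and n2: "N s = {l, w}" and n3: "N w = {s, u}" and n4: "N u = {w, w'}"
    and n5: "N w' = {u, s'}" and n6: "N s' = {w', l'}" and n7: "N l' = {s'}"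
    and dist: "distinct [l, s, w, u, w', s', l']"
  shows "graph_iso T (path_graph 6)"
proof -
  define xs where "xs = [l, s, w, u, w', s', l']"
  define g where "g i = xs ! i" for i
  have b: "bij_betw g {0..6} V"
  proof -
    have "bij_betw ((!) xs) {..<length xs} (set xs)" using bij_betw_nth[of xs] dist xs_def by simp
    moreover have "{..<length xs} = {0..6::nat}" unfolding xs_def by auto
    moreover have "set xs = V" using V7 xs_def by simp
    ultimately show ?thesis unfolding g_def by (simp add: fun_eq_iff)
  qed
  have gV: "g i \<in> V" if "i \<in> {0..6}" for i using b that bij_betwE by blast
  have "{i, j} \<in> edges (path_graph 6) \<longleftrightarrow> {g i, g j} \<in> edges T" if ij: "i \<in> {0..6}" "j \<in> {0..6}" for i j
  proof -
    have "{g i, g j} \<in> edges T \<longleftrightarrow> g i \<in> N (g j)" using edge_iff_nbhd[OF wf gV[OF ij(2)]] .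
    moreover have "{i, j} \<in> edges (path_graph 6) \<longleftrightarrow> (i = Suc j \<or> j = Suc i)" using path_edges ij by auto
    moreover have "g i \<in> N (g j) \<longleftrightarrow> (i = Suc j \<or> j = Suc i)"
    proof -
      have i7: "i = 0 \<or> i = 1 \<or> i = 2 \<or> i = 3 \<or> i = 4 \<or> i = 5 \<or> i = 6" using ij by auto
      have j7: "j = 0 \<or> j = 1 \<or> j = 2 \<or> j = 3 \<or> j = 4 \<or> j = 5 \<or> j = 6" using ij by auto
      have d: "l \<noteq> s" "l \<noteq> w" "l \<noteq> u" "l \<noteq> w'" "l \<noteq> s'" "l \<noteq> l'"
        "s \<noteq> w" "s \<noteq> u" "s \<noteq> w'" "s \<noteq> s'" "s \<noteq> l'" "w \<noteq> u" "w \<noteq> w'" "w \<noteq> s'" "w \<noteq> l'"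
        "u \<noteq> w'" "u \<noteq> s'" "u \<noteq> l'" "w' \<noteq> s'" "w' \<noteq> l'" "s' \<noteq> l'" using dist by auto
      note d' = d d[symmetric]
      show ?thesis using i7 j7 unfolding g_def xs_def
        by (elim disjE) (simp_all add: n1 n2 n3 n4 n5 n6 n7 d')
    qed
    ultimately show ?thesis by simp
  qed
  then have "isof (path_graph 6) T g" unfolding isof_def path_verts using b by blast
  then have "isof T (path_graph 6) (inv_into (verts (path_graph 6)) g)" using isof_inv by blast
  then show ?thesis using graph_iso_isof by blast
qed

end

context gtree begin

lemma V3nb2: "h x = 3 \<Longrightarrow> y \<in> N x \<Longrightarrow> h y = 2" by (rule V3_nb)

lemma reduce:
  assumes IH: "\<And>P. P \<noteq> {} \<Longrightarrow> P \<subseteq> V \<Longrightarrow> gtree (del T P) \<Longrightarrow>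
      \<exists>vs. valid_O_seq (path_graph 6) vs \<and> graph_iso (del T P) (opO_seq (path_graph 6) vs)"
  shows "\<exists>vs. valid_O_seq (path_graph 6) vs \<and> graph_iso T (opO_seq (path_graph 6) vs)"
proof (cases "\<exists>s l l'. s \<in> V \<and> h s = 1 \<and> l \<noteq> l' \<and> l \<in> N s \<and> l' \<in> N s \<and> leaf T l \<and> leaf T l'")
  case True
  then obtain s l l' where sl: "s \<in> V" "h s = 1" "l \<noteq> l'" "l \<in> N s" "l' \<in> N s" "leaf T l" "leaf T l'" by blast
  define p where "p = (\<lambda>i::nat. l)"
  have P: "p ` {0..0} = {l}" using p_def by simp
  obtain w where w: "w \<in> N s" "h w = 2" using V1_V2[OF sl(1,2)] by blast
  have hl: "h l = 0" "h l' = 0" using leaf_h0 sl by auto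
  obtain z where z: "z \<in> V" "h z = 3" using ex3 by blast
  show ?thesis
  proof (rule step[of p 0 s])
    show "inj_on p {0..0}" by simp
    show "p ` {0..0} \<subseteq> V" using P nbV[OF sl(4)] by simp
    show "s \<in> V" "s \<notin> p ` {0..0}" using sl(1) P nbneq[OF sl(4)] by auto
    show "\<forall>i\<le>0. N (p i) = (if 0 < i then {p (i - 1)} else {}) \<union> (if i < 0 then {p (Suc i)} else {}) \<union> (if i = 0 then {s} else {})"
      using leafN2[OF sl(6,4)] p_def by simp
    show "(0 = (0::nat) \<and> h s = 1) \<or> (0 = (3::nat) \<and> h s = 2) \<or> (0 = (2::nat) \<and> h s = 3)" using sl(2) by simp
    show "\<exists>y\<in>N s - p ` {0..0}. Suc (h y) = h s" using sl hl P by auto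
    show "\<exists>a b. a \<noteq> b \<and> a \<in> N s - p ` {0..0} \<and> b \<in> N s - p ` {0..0}"
      using sl hl w P by (intro exI[of _ l'] exI[of _ w]) auto
    show "\<exists>x\<in>V - p ` {0..0}. h x = 3" using z hl P by (intro bexI[of _ z]) auto
    show "gtree (del T (p ` {0..0})) \<Longrightarrow> \<exists>vs. valid_O_seq (path_graph 6) vs \<and> graph_iso (del T (p ` {0..0})) (opO_seq (path_graph 6) vs)"
      using IH[of "p ` {0..0}"] P nbV[OF sl(4)] by simp
  qed
next
  case noI: False
  have oneleaf: "l = l'" if "s \<in> V" "h s = 1" "l \<in> N s" "l' \<in> N s" "leaf T l" "leaf T l'" for s l l'
    using noI that by blast
  have V2V3: "\<exists>u\<in>N w. h u = 3" if wV: "w \<in> V" and hw: "h w = 2" for w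
  proof -
    obtain a b where ab: "a \<noteq> b" "a \<in> N w" "b \<in> N w" using nonleaf2[OF wV] hw by auto
    have "h a = 1 \<or> h a = 3" "h b = 1 \<or> h b = 3" using V2_nb[OF hw] ab by auto
    then show ?thesis using s2 wV hw ab by metis
  qed
  have "\<exists>w. w \<in> V \<and> h w = 2 \<and> \<not> (\<exists>a b. a \<noteq> b \<and> a \<in> N w \<and> b \<in> N w \<and> h a = 3 \<and> h b = 3)"
  proof (rule ccontr)
    assume nw: "\<not> ?thesis"
    have all2: "\<exists>a b. a \<noteq> b \<and> a \<in> N w \<and> b \<in> N w \<and> h a = 3 \<and> h b = 3" if "w \<in> V" "h w = 2" for w
      using nw that by blast
    define S where "S = {x \<in> V. h x = 2 \<or> h x = 3}"
    have "has_cycle T"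
    proof (rule deg2_cycle[OF _ _ _ _ wf])
      show "finite S" using fin S_def by simp
      show "S \<subseteq> V" using S_def by blast
      obtain z where "z \<in> V" "h z = 3" using ex3 by blast
      then show "S \<noteq> {}" using S_def by blast
      show "\<forall>x\<in>S. \<exists>a b. a \<noteq> b \<and> a \<in> N x \<inter> S \<and> b \<in> N x \<inter> S"
      proof
        fix x assume "x \<in> S"
        then have x: "x \<in> V" "h x = 2 \<or> h x = 3" using S_def by auto
        show "\<exists>a b. a \<noteq> b \<and> a \<in> N x \<inter> S \<and> b \<in> N x \<inter> S"
        proof (cases "h x = 2")
          case True
          then obtain a b where "a \<noteq> b" "a \<in> N x" "b \<in> N x" "h a = 3" "h b = 3" using all2 x by blast
          then show ?thesis using S_def nbV by blast
        next
          case False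
          then have h3x: "h x = 3" using x by simp
          obtain a b where ab: "a \<noteq> b" "a \<in> N x" "b \<in> N x" using nonleaf2[OF x(1)] h3x by auto
          have "h a = 2" "h b = 2" using V3_nb[OF h3x] ab by auto
          then show ?thesis using ab S_def nbV by blast
        qed
      qed
    qed
    then show False using acyc by simp
  qed
  then obtain w where w: "w \<in> V" "h w = 2" "\<not> (\<exists>a b. a \<noteq> b \<and> a \<in> N w \<and> b \<in> N w \<and> h a = 3 \<and> h b = 3)"
    by blast
  obtain u where u: "u \<in> N w" "h u = 3" using V2V3[OF w(1,2)] by blast
  have uonly: "x = u" if "x \<in> N w" "h x = 3" for x using w(3) u that by blast
  obtain s where s: "s \<in> N w" "h s = 1" using descend[OF w(1)] w(2) by force
  have sV: "s \<in> V" using nbV[OF s(1)] by simp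
  obtain l where l: "l \<in> N s" "leaf T l" using V1_leaf[OF sV s(2)] by blast
  have hl: "h l = 0" using leaf_h0[OF l(2)] .
  have uV: "u \<in> V" using nbV[OF u(1)] by simp
  have Nl: "N l = {s}" using leafN2[OF l(2,1)] .
  have Ns: "N s = {l, w}"
  proof
    show "N s \<subseteq> {l, w}"
    proof
      fix x assume x: "x \<in> N s"
      then have "h x = 0 \<or> h x = 2" using V1_nb[OF s(2)] by blast
      then show "x \<in> {l, w}"
      proof
        assume "h x = 0"
        then have "leaf T x" using leaf_iff nbV[OF x] by blast
        then show ?thesis using oneleaf[OF sV s(2) x l(1)] l(2) by blast
      next
        assume "h x = 2"
        then show ?thesis using s1 sV s(2) x nbsym[OF s(1)] w(2) by blast
      qed
    qed
    show "{l, w} \<subseteq> N s" using l(1) nbsym[OF s(1)] by blast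
  qed
  have Nw: "N w = {s, u}"
  proof
    show "N w \<subseteq> {s, u}"
    proof
      fix x assume x: "x \<in> N w"
      then have "h x = 1 \<or> h x = 3" using V2_nb[OF w(2)] by blast
      then show "x \<in> {s, u}"
      proof
        assume "h x = 1" then show ?thesis using s2 w(1,2) x s by blast
      next
        assume "h x = 3" then show ?thesis using uonly x by blast
      qed
    qed
    show "{s, u} \<subseteq> N w" using s(1) u(1) by blast
  qed
  have wu: "w \<in> N u" using nbsym[OF u(1)] .
  show ?thesis
  proof (cases "\<exists>a b. a \<noteq> b \<and> a \<in> N u - {w} \<and> b \<in> N u - {w}")
    case True
    then obtain a b where ab: "a \<noteq> b" "a \<in> N u - {w}" "b \<in> N u - {w}" by blast
    define p where "p = (\<lambda>i. [l, s, w] ! i)"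
    have P: "p ` {0..2} = {l, s, w}"
    proof -
      have "{0..2::nat} = {0, 1, 2}" by auto
      then show ?thesis using p_def by simp
    qed
    have ha: "h a = 2" "h b = 2" using V3_nb[OF u(2)] ab by auto
    show ?thesis
    proof (rule step[of p 2 u])
      show "inj_on p {0..2}"
      proof -
        have "distinct [l, s, w]" using hl s(2) w(2) by auto
        then show ?thesis unfolding p_def using inj_on_nth[of "[l, s, w]" "{0..2}"] by simp
      qed
      show "p ` {0..2} \<subseteq> V" using P nbV[OF l(1)] sV w(1) by simp
      show "u \<in> V" "u \<notin> p ` {0..2}" using uV P hl s(2) w(2) u(2) by auto
      show "\<forall>i\<le>2. N (p i) = (if 0 < i then {p (i - 1)} else {}) \<union> (if i < 2 then {p (Suc i)} else {}) \<union> (if i = 2 then {u} else {})"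
      proof (intro allI impI)
        fix i :: nat assume "i \<le> 2"
        then have "i = 0 \<or> i = 1 \<or> i = 2" by auto
        then show "N (p i) = (if 0 < i then {p (i - 1)} else {}) \<union> (if i < 2 then {p (Suc i)} else {}) \<union> (if i = 2 then {u} else {})"
          using Nl Ns Nw p_def by (auto simp: insert_commute)
      qed
      show "(2 = (0::nat) \<and> h u = 1) \<or> (2 = (3::nat) \<and> h u = 2) \<or> (2 = (2::nat) \<and> h u = 3)" using u(2) by simp
      show "\<exists>y\<in>N u - p ` {0..2}. Suc (h y) = h u" using ab ha P hl s(2) u(2) by (intro bexI[of _ a]) auto
      show "\<exists>a b. a \<noteq> b \<and> a \<in> N u - p ` {0..2} \<and> b \<in> N u - p ` {0..2}"
        using ab ha P hl s(2) by (intro exI[of _ a] exI[of _ b]) auto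
      show "\<exists>x\<in>V - p ` {0..2}. h x = 3" using uV u(2) P hl s(2) w(2) by (intro bexI[of _ u]) auto
      show "gtree (del T (p ` {0..2})) \<Longrightarrow> \<exists>vs. valid_O_seq (path_graph 6) vs \<and> graph_iso (del T (p ` {0..2})) (opO_seq (path_graph 6) vs)"
        using IH[of "p ` {0..2}"] P nbV[OF l(1)] sV w(1) by simp
    qed
  next
    case noII: False
    obtain a b where ab: "a \<noteq> b" "a \<in> N u" "b \<in> N u" using nonleaf2[OF uV] u(2) by auto
    obtain w' where w': "w' \<in> N u" "w' \<noteq> w" using ab by blast
    have Nu: "N u = {w, w'}" using noII w' wu by blast
    have hw': "h w' = 2" using V3_nb[OF u(2) w'(1)] .
    have w'V: "w' \<in> V" using nbV[OF w'(1)] by simp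
    obtain s' where s': "s' \<in> N w'" "h s' = 1" using descend[OF w'V] hw' by force
    have s'V: "s' \<in> V" using nbV[OF s'(1)] by simp
    have ss': "s' \<noteq> s"
    proof
      assume "s' = s"
      then have "w' \<in> N s" using nbsym[OF s'(1)] by simp
      then show False using Ns w'(2) hw' hl by auto
    qed
    show ?thesis
    proof (cases "\<exists>u'\<in>N w'. u' \<noteq> u \<and> h u' = 3")
      case True
      then obtain u' where u': "u' \<in> N w'" "u' \<noteq> u" "h u' = 3" by blast
      define p where "p = (\<lambda>i. [l, s, w, u] ! i)"
      have P: "p ` {0..3} = {l, s, w, u}"
      proof -
        have "{0..3::nat} = {0, 1, 2, 3}" by auto
        then show ?thesis using p_def by simp
      qed
      show ?thesis
      proof (rule step[of p 3 w'])
        show "inj_on p {0..3}"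
        proof -
          have "distinct [l, s, w, u]" using hl s(2) w(2) u(2) by auto
          then show ?thesis unfolding p_def using inj_on_nth[of "[l, s, w, u]" "{0..3}"] by simp
        qed
        show "p ` {0..3} \<subseteq> V" using P nbV[OF l(1)] sV w(1) uV by simp
        show "w' \<in> V" "w' \<notin> p ` {0..3}" using w'V P hl s(2) hw' u(2) w'(2) by auto
        show "\<forall>i\<le>3. N (p i) = (if 0 < i then {p (i - 1)} else {}) \<union> (if i < 3 then {p (Suc i)} else {}) \<union> (if i = 3 then {w'} else {})"
        proof (intro allI impI)
          fix i :: nat assume "i \<le> 3"
          then have "i = 0 \<or> i = 1 \<or> i = 2 \<or> i = 3" by auto
          then show "N (p i) = (if 0 < i then {p (i - 1)} else {}) \<union> (if i < 3 then {p (Suc i)} else {}) \<union> (if i = 3 then {w'} else {})"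
            using Nl Ns Nw Nu p_def by (auto simp: insert_commute)
        qed
        show "(3 = (0::nat) \<and> h w' = 1) \<or> (3 = (3::nat) \<and> h w' = 2) \<or> (3 = (2::nat) \<and> h w' = 3)" using hw' by simp
        show "\<exists>y\<in>N w' - p ` {0..3}. Suc (h y) = h w'"
          using s' ss' P hw' hl w(2) u(2) by (intro bexI[of _ s']) auto
        show "\<exists>a b. a \<noteq> b \<and> a \<in> N w' - p ` {0..3} \<and> b \<in> N w' - p ` {0..3}"
        proof -
          have "s' \<noteq> u'" using s'(2) u'(3) by auto
          moreover have "s' \<notin> {l, s, w, u}" using ss' s'(2) hl w(2) u(2) by auto
          moreover have "u' \<notin> {l, s, w, u}" using u'(2,3) hl s(2) w(2) by auto
          ultimately show ?thesis using s'(1) u'(1) P by blast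
        qed
        show "\<exists>x\<in>V - p ` {0..3}. h x = 3"
          using u' nbV[OF u'(1)] P hl s(2) w(2) by (intro bexI[of _ u']) auto
        show "gtree (del T (p ` {0..3})) \<Longrightarrow> \<exists>vs. valid_O_seq (path_graph 6) vs \<and> graph_iso (del T (p ` {0..3})) (opO_seq (path_graph 6) vs)"
          using IH[of "p ` {0..3}"] P nbV[OF l(1)] sV w(1) uV by simp
      qed
    next
      case noIII: False
      (* case (iv): T is P6 *)
      obtain l' where l': "l' \<in> N s'" "leaf T l'" using V1_leaf[OF s'V s'(2)] by blast
      have hl': "h l' = 0" using leaf_h0[OF l'(2)] .
      have Nl': "N l' = {s'}" using leafN2[OF l'(2,1)] .
      have Ns': "N s' = {l', w'}"
      proof
        show "N s' \<subseteq> {l', w'}"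
        proof
          fix x assume x: "x \<in> N s'"
          then have "h x = 0 \<or> h x = 2" using V1_nb[OF s'(2)] by blast
          then show "x \<in> {l', w'}"
          proof
            assume "h x = 0"
            then have "leaf T x" using leaf_iff nbV[OF x] by blast
            then show ?thesis using oneleaf[OF s'V s'(2) x l'(1)] l'(2) by blast
          next
            assume "h x = 2"
            then show ?thesis using s1 s'V s'(2) x nbsym[OF s'(1)] hw' by blast
          qed
        qed
        show "{l', w'} \<subseteq> N s'" using l'(1) nbsym[OF s'(1)] by blast
      qed
      have Nw': "N w' = {u, s'}"
      proof
        show "N w' \<subseteq> {u, s'}"
        proof
          fix x assume x: "x \<in> N w'"
          then have "h x = 1 \<or> h x = 3" using V2_nb[OF hw'] by blast
          then show "x \<in> {u, s'}"
          proof
            assume "h x = 1" then show ?thesis using s2 w'V hw' x s' by blast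
          next
            assume "h x = 3" then show ?thesis using noIII x by blast
          qed
        qed
        show "{u, s'} \<subseteq> N w'" using s'(1) nbsym[OF w'(1)] by blast
      qed
      have ll': "l \<noteq> l'" using Nl Nl' ss' by auto
      have dist: "distinct [l, s, w, u, w', s', l']"
        using hl hl' s(2) s'(2) w(2) hw' u(2) ss' ll' w'(2) by auto
      define X where "X = {l, s, w, u, w', s', l'}"
      have "X = V"
      proof (rule cconn')
        show "X \<subseteq> V" using X_def nbV[OF l(1)] sV w(1) uV w'V s'V nbV[OF l'(1)] by blast
        show "X \<noteq> {}" using X_def by blast
        show "\<forall>x\<in>X. N x \<subseteq> X" using X_def Nl Ns Nw Nu Nw' Ns' Nl' by auto
      qed
      then have "graph_iso T (path_graph 6)"
      proof -
        have Ns'': "N s' = {w', l'}" using Ns' by (simp add: insert_commute)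
        have V7: "V = {l, s, w, u, w', s', l'}" using \<open>X = V\<close> X_def by simp
        show ?thesis using base_iso[OF V7 Nl Ns Nw Nu Nw' Ns'' Nl' dist] .
      qed
      then show ?thesis by (intro exI[of _ "[]"]) simp
    qed
  qed
qed

end

lemma main_ind:
  fixes T :: "'a graph"
  shows "gtree T \<Longrightarrow> \<exists>vs. valid_O_seq (path_graph 6) vs \<and> graph_iso T (opO_seq (path_graph 6) vs)"
proof (induction "card (verts T)" arbitrary: T rule: less_induct)
  case less
  have fin: "finite (verts T)"
    using less.prems unfolding gtree_def htree_def wf_graph_def by blast
  show ?case
  proof (rule gtree.reduce[OF less.prems])
    fix P assume P: "P \<noteq> {}" "P \<subseteq> verts T" "gtree (del T P)"
    have "verts (del T P) \<subset> verts T" using P(1,2) del_verts[of T P] by blast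
    then have "card (verts (del T P)) < card (verts T)" using psubset_card_mono[OF fin] by blast
    then show "\<exists>vs. valid_O_seq (path_graph 6) vs \<and> graph_iso (del T P) (opO_seq (path_graph 6) vs)"
      using less.hyps P(3) by blast
  qed
qed

theorem theorem3p54:
  fixes T :: "'a graph"
  assumes "balanced_tree T" and "unmixed T" and "gheight T = 3"
  shows "graph_iso T (path_graph 6) \<or>
         (\<exists>vs. vs \<noteq> [] \<and> valid_O_seq (path_graph 6) vs \<and>
               graph_iso T (opO_seq (path_graph 6) vs))"
proof -
  have ht: "htree T" using from_assms[OF assms(1,3)] .
  have gt: "gtree T" using htree.to_gtree[OF ht assms(2)] .
  obtain vs where vs: "valid_O_seq (path_graph 6) vs" "graph_iso T (opO_seq (path_graph 6) vs)"
    using main_ind[OF gt] by blast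
  show ?thesis
  proof (cases "vs = []")
    case True then show ?thesis using vs by simp
  next
    case False then show ?thesis using vs by blast
  qed
qed

end
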